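(* Let $H$, its Coxeter generators $s_1,\dots,s_6,s_{3'}$, $G$, the cosets $\pm v(i,j)$, and $H_1$ with its Coxeter generators $a_1,\dots,a_5,a_{1'}$ be as in the context, and define $Q=\langle s_1,s_2,s_3,s_4,s_5,s_{3'}\rangle\subset H$. Then: (a) $Q$ is isomorphic to $H_1$ via the map $m$ determined on generators by $m(s_k)=a_{6-k}$ for $1\le k\le 5$ and $m(s_{3'})=a_{1'}$ (so $Q\cong W(D_6)$); (b) the action of $Q$ by right multiplication on the 56 right cosets of $G$ in $H$ has exactly three orbits, namely $\mathscr{O}_1=\{v(0,j):2\le j\le7\}\cup\{-v(1,j):2\le j\le 7\}$, $\mathscr{O}_2=\{v(1,j):2\le j\le7\}\cup\{-v(0,j):2\le j\le 7\}$, $\mathscr{O}_3=\{\pm v(i,j): (i,j)=(0,1)\text{ or } 2\le i<j\le 7\}$.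
   Context: Let $W=\{(a,b,c,d,e,f,g,h)^T\in\mathbb{C}^8: 2+3a=b+c+d+e+f+g+h\}$. A transposition $(ij)$ is identified with the permutation matrix swapping coordinates $i$ and $j$. Let $X\in GL(8,\mathbb{C})$ be the matrix whose rows are $(\tfrac12,\tfrac12,-\tfrac12,-\tfrac12,-\tfrac12,\tfrac12,\tfrac12,\tfrac12)$, $e_2$, $(-\tfrac12,\tfrac12,\tfrac12,-\tfrac12,-\tfrac12,\tfrac12,\tfrac12,\tfrac12)$, $(-\tfrac12,\tfrac12,-\tfrac12,\tfrac12,-\tfrac12,\tfrac12,\tfrac12,\tfrac12)$, $(-\tfrac12,\tfrac12,-\tfrac12,-\tfrac12,\tfrac12,\tfrac12,\tfrac12,\tfrac12)$, $e_6,e_7,e_8$, and $Y$ the matrix with rows $(-1,2,0,0,0,0,0,0)$, $(-1,1,1,0,0,0,0,0)$, $(0,1,0,0,0,0,0,0)$, and $-e_1+e_2+e_r$ for $r=4,\dots,8$. Let $H=\langle(23),(34),(45),(56),(67),(78),X,Y\rangle\cong W(E_7)$ with Coxeter generators $s_1=Y(23)$, $s_2=(34)$, $s_3=(45)$, $s_4=(56)$, $s_5=(67)$, $s_6=(78)$, $s_{3'}=X$, and $G=\langle s_2,\dots,s_6,s_{3'}\rangle$. For $\vec w\in W$ put $x_0=b,x_1=h,x_2=g,x_3=f,x_4=e,x_5=d,x_6=c,x_7=a$. The right coset $G\alpha$ is determined by the second entry of $\alpha\vec w$ (as an affine function of $\vec w$); $v(i,j)$ ($0\le i<j\le7$) is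 the coset for which this entry is $x_i+x_j-x_7$, and $-v(i,j)$ the coset for which it is $1+x_7-x_i-x_j$; these are all 56 cosets. Let $V=\{(A,\dots,G)^T\in\mathbb{C}^7:E+F+G-A-B-C-D=1\}$, let $X_1\in GL(7,\mathbb{C})$ have rows $e_1$, $-e_3+e_5$, $-e_2+e_5$, $e_4$, $e_5$, $-e_2-e_3+e_5+e_6$, $-e_2-e_3+e_5+e_7$, and let $H_1=\langle(12),(23),(34),(56),(67),X_1\rangle\subset GL(7,\mathbb{C})$ ($\cong W(D_6)$), with Coxeter generators $a_1=(23),a_2=(34),a_3=X_1,a_4=(56),a_5=(67),a_{1'}=(14)$. *)

theory Defs
  imports "Jordan_Normal_Form.Matrix" "HOL-Algebra.Coset" "HOL-Algebra.Generated_Groups" "HOL-Algebra.Group_Action"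
begin

definition GLm :: "nat \<Rightarrow> complex mat monoid" where
  "GLm n = \<lparr>carrier = {A \<in> carrier_mat n n. invertible_mat A}, mult = (*), one = 1\<^sub>m n\<rparr>"

definition gen_grp :: "nat \<Rightarrow> complex mat set \<Rightarrow> complex mat monoid" where
  "gen_grp n S = (GLm n)\<lparr>carrier := generate (GLm n) S\<rparr>"

text \<open>Permutation matrix of the transposition (i j), coordinates numbered 1..n as in the paper.\<close>
definition tmat :: "nat \<Rightarrow> nat \<Rightarrow> nat \<Rightarrow> complex mat" where
  "tmat n i j = mat n n (\<lambda>(r,c). if (if r = i - 1 then j - 1 else if r = j - 1 then i - 1 else r) = c
                                   then 1 else 0)"

definition Xm :: "complex mat" where
  "Xm = mat_of_rows_list 8
    [[1/2, 1/2, -1/2, -1/2, -1/2, 1/2, 1/2, 1/2],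
     [0, 1, 0, 0, 0, 0, 0, 0],
     [-1/2, 1/2, 1/2, -1/2, -1/2, 1/2, 1/2, 1/2],
     [-1/2, 1/2, -1/2, 1/2, -1/2, 1/2, 1/2, 1/2],
     [-1/2, 1/2, -1/2, -1/2, 1/2, 1/2, 1/2, 1/2],
     [0, 0, 0, 0, 0, 1, 0, 0],
     [0, 0, 0, 0, 0, 0, 1, 0],
     [0, 0, 0, 0, 0, 0, 0, 1]]"

definition Ym :: "complex mat" where
  "Ym = mat_of_rows_list 8
    [[-1, 2, 0, 0, 0, 0, 0, 0],
     [-1, 1, 1, 0, 0, 0, 0, 0],
     [0, 1, 0, 0, 0, 0, 0, 0],
     [-1, 1, 0, 1, 0, 0, 0, 0],
     [-1, 1, 0, 0, 1, 0, 0, 0],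
     [-1, 1, 0, 0, 0, 1, 0, 0],
     [-1, 1, 0, 0, 0, 0, 1, 0],
     [-1, 1, 0, 0, 0, 0, 0, 1]]"

definition X1m :: "complex mat" where
  "X1m = mat_of_rows_list 7
    [[1, 0, 0, 0, 0, 0, 0],
     [0, 0, -1, 0, 1, 0, 0],
     [0, -1, 0, 0, 1, 0, 0],
     [0, 0, 0, 1, 0, 0, 0],
     [0, 0, 0, 0, 1, 0, 0],
     [0, -1, -1, 0, 1, 1, 0],
     [0, -1, -1, 0, 1, 0, 1]]"

definition s1 :: "complex mat" where "s1 = Ym * tmat 8 2 3"
definition s2 :: "complex mat" where "s2 = tmat 8 3 4"
definition s3 :: "complex mat" where "s3 = tmat 8 4 5"
definition s4 :: "complex mat" where "s4 = tmat 8 5 6"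
definition s5 :: "complex mat" where "s5 = tmat 8 6 7"
definition s6 :: "complex mat" where "s6 = tmat 8 7 8"
definition s3' :: "complex mat" where "s3' = Xm"

definition Hgrp :: "complex mat monoid" where
  "Hgrp = gen_grp 8 {tmat 8 2 3, tmat 8 3 4, tmat 8 4 5, tmat 8 5 6, tmat 8 6 7, tmat 8 7 8, Xm, Ym}"

definition Ggrp :: "complex mat monoid" where
  "Ggrp = gen_grp 8 {s2, s3, s4, s5, s6, s3'}"

definition Qgrp :: "complex mat monoid" where
  "Qgrp = gen_grp 8 {s1, s2, s3, s4, s5, s3'}"

definition a1 :: "complex mat" where "a1 = tmat 7 2 3"
definition a2 :: "complex mat" where "a2 = tmat 7 3 4"
definition a3 :: "complex mat" where "a3 = X1m"
definition a4 :: "complex mat" where "a4 = tmat 7 5 6"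
definition a5 :: "complex mat" where "a5 = tmat 7 6 7"
definition a1' :: "complex mat" where "a1' = tmat 7 1 4"

definition H1grp :: "complex mat monoid" where
  "H1grp = gen_grp 7 {tmat 7 1 2, tmat 7 2 3, tmat 7 3 4, tmat 7 5 6, tmat 7 6 7, X1m}"

text \<open>Vectors (a,b,c,d,e,f,g,h) are stored with index 0..7.\<close>
definition Wset :: "complex vec set" where
  "Wset = {w \<in> carrier_vec 8. 2 + 3 * w $ 0 = w $ 1 + w $ 2 + w $ 3 + w $ 4 + w $ 5 + w $ 6 + w $ 7}"

text \<open>x_0=b, x_1=h, x_2=g, x_3=f, x_4=e, x_5=d, x_6=c, x_7=a.\<close>
definition xc :: "nat \<Rightarrow> complex vec \<Rightarrow> complex" where
  "xc k w = w $ ([1, 7, 6, 5, 4, 3, 2, 0] ! k)"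

text \<open>The right coset of G in H on which the second entry of alpha w is x_i + x_j - x_7 (on W).\<close>
definition vpos :: "nat \<Rightarrow> nat \<Rightarrow> complex mat set" where
  "vpos i j = {\<alpha> \<in> carrier Hgrp. \<forall>w \<in> Wset. (\<alpha> *\<^sub>v w) $ 1 = xc i w + xc j w - xc 7 w}"

definition vneg :: "nat \<Rightarrow> nat \<Rightarrow> complex mat set" where
  "vneg i j = {\<alpha> \<in> carrier Hgrp. \<forall>w \<in> Wset. (\<alpha> *\<^sub>v w) $ 1 = 1 + xc 7 w - xc i w - xc j w}"

definition Q_orbit :: "complex mat set \<Rightarrow> complex mat set set" where
  "Q_orbit C = {C #>\<^bsub>Hgrp\<^esub> q | q. q \<in> carrier Qgrp}"

definition Q_orbits :: "complex mat set set set" where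
  "Q_orbits = Q_orbit ` (rcosets\<^bsub>Hgrp\<^esub> (carrier Ggrp))"

definition O1 :: "complex mat set set" where
  "O1 = {vpos 0 j | j. 2 \<le> j \<and> j \<le> 7} \<union> {vneg 1 j | j. 2 \<le> j \<and> j \<le> 7}"

definition O2 :: "complex mat set set" where
  "O2 = {vpos 1 j | j. 2 \<le> j \<and> j \<le> 7} \<union> {vneg 0 j | j. 2 \<le> j \<and> j \<le> 7}"

definition O3 :: "complex mat set set" where
  "O3 = {vpos 0 1, vneg 0 1} \<union> {vpos i j | i j. 2 \<le> i \<and> i < j \<and> j \<le> 7}
                             \<union> {vneg i j | i j. 2 \<le> i \<and> i < j \<and> j \<le> 7}"

end

theory Submission
  imports Defs
begin

fun vadd :: "complex list \<Rightarrow> complex list \<Rightarrow> complex list" where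
  "vadd (x#xs) (y#ys) = (x+y) # vadd xs ys"
| "vadd _ _ = []"

fun lvm :: "complex list \<Rightarrow> complex list \<Rightarrow> complex list list \<Rightarrow> complex list" where
  "lvm z [] rs = z"
| "lvm z (x#xs) (r#rs) = vadd (map (\<lambda>y. x*y) r) (lvm z xs rs)"
| "lvm z (x#xs) [] = z"

lemma vadd_length[simp]: "length (vadd a b) = min (length a) (length b)"
  by (induction a b rule: vadd.induct) auto

lemma vadd_nth: "j < length a \<Longrightarrow> j < length b \<Longrightarrow> vadd a b ! j = a!j + b!j"
proof (induction a b arbitrary: j rule: vadd.induct)
  case (1 x xs y ys) then show ?case by (cases j) auto
qed auto

lemma lvm_length: "(\<forall>r\<in>set rs. length r = n) \<Longrightarrow> length z = n \<Longrightarrow> length (lvm z xs rs) = n"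
  by (induction z xs rs rule: lvm.induct) auto

lemma lvm_nth:
  assumes "length xs = length rs" "\<forall>r\<in>set rs. length r = n" "length z = n" "\<forall>j<n. z!j = 0" "j < n"
  shows "lvm z xs rs ! j = (\<Sum>k<length xs. xs!k * rs!k!j)"
  using assms
proof (induction xs arbitrary: rs)
  case Nil then show ?case by simp
next
  case (Cons x xs)
  then obtain r rs' where rs: "rs = r # rs'" by (cases rs) auto
  have "lvm z (x#xs) rs ! j = x * r!j + lvm z xs rs' ! j"
    using Cons.prems rs lvm_length[of rs' n z xs] by (simp add: vadd_nth)
  also have "lvm z xs rs' ! j = (\<Sum>k<length xs. xs!k * rs'!k!j)"
    using Cons rs by simp
  finally show ?case using rs by (simp only: length_Cons sum.lessThan_Suc_shift nth_Cons_0 nth_Cons_Suc)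
qed

definition rvm :: "complex vec \<Rightarrow> complex mat \<Rightarrow> complex vec" where
  "rvm v A = vec (dim_col A) (\<lambda>j. v \<bullet> col A j)"

lemma rvm_carrier[simp]: "A \<in> carrier_mat n m \<Longrightarrow> rvm v A \<in> carrier_vec m"
  by (simp add: rvm_def)

lemma rvm_mult:
  assumes "A \<in> carrier_mat n n" "B \<in> carrier_mat n n" "v \<in> carrier_vec n"
  shows "rvm v (A * B) = rvm (rvm v A) B"
proof (rule eq_vecI)
  fix j assume j: "j < dim_vec (rvm (rvm v A) B)"
  then have j': "j < n" using assms by (simp add: rvm_def)
  have "rvm v (A * B) $ j = v \<bullet> vec n (\<lambda>i. row A i \<bullet> col B j)"
    using assms j' by (simp add: rvm_def col_mult del: col_mult2)
  also have "\<dots> = vec n (\<lambda>k. v \<bullet> col A k) \<bullet> col B j"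
    using assms j' by (subst assoc_scalar_prod[of v n A n "col B j"]) auto
  also have "\<dots> = rvm (rvm v A) B $ j"
    using assms j' by (simp add: rvm_def)
  finally show "rvm v (A * B) $ j = rvm (rvm v A) B $ j" .
qed (use assms in \<open>simp add: rvm_def\<close>)

lemma rvm_one: "v \<in> carrier_vec n \<Longrightarrow> rvm v (1\<^sub>m n) = v"
  by (rule eq_vecI) (auto simp: rvm_def)

lemma row_rvm: "A \<in> carrier_mat n m \<Longrightarrow> B \<in> carrier_mat m k \<Longrightarrow> i < n \<Longrightarrow> row (A * B) i = rvm (row A i) B"
  by (simp add: rvm_def)

lemma row_unit_rvm: "A \<in> carrier_mat n m \<Longrightarrow> i < n \<Longrightarrow> row A i = rvm (unit_vec n i) A"
  by (rule eq_vecI) (auto simp: rvm_def)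

lemma mrl_index: "i < length rs \<Longrightarrow> j < n \<Longrightarrow> mat_of_rows_list n rs $$ (i,j) = rs!i!j"
  by (simp add: mat_of_rows_list_def)

lemma mrl_carrier[simp]: "mat_of_rows_list n rs \<in> carrier_mat (length rs) n"
  by (simp add: mat_of_rows_list_def)

lemma rvm_mrl:
  assumes "length xs = length rs" "\<forall>r\<in>set rs. length r = n" "length z = n" "\<forall>j<n. z!j = 0"
  shows "rvm (vec_of_list xs) (mat_of_rows_list n rs) = vec_of_list (lvm z xs rs)"
proof (rule eq_vecI)
  show "dim_vec (rvm (vec_of_list xs) (mat_of_rows_list n rs)) = dim_vec (vec_of_list (lvm z xs rs))"
    using assms lvm_length[OF assms(2,3)] by (simp add: rvm_def mat_of_rows_list_def)
  fix j assume "j < dim_vec (vec_of_list (lvm z xs rs))"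
  then have j: "j < n" using assms lvm_length[OF assms(2,3)] by simp
  have "rvm (vec_of_list xs) (mat_of_rows_list n rs) $ j = (\<Sum>k<length xs. xs!k * rs!k!j)"
    using assms j by (simp add: rvm_def scalar_prod_def mat_of_rows_list_def vec_of_list_index
        atLeast0LessThan)
  also have "\<dots> = lvm z xs rs ! j" by (subst lvm_nth[OF assms j]) (simp add: assms(1))
  finally show "rvm (vec_of_list xs) (mat_of_rows_list n rs) $ j = vec_of_list (lvm z xs rs) $ j"
    by (simp add: vec_of_list_index)
qed

lemma mrl_mult:
  assumes "\<forall>r\<in>set A. length r = length B" "\<forall>r\<in>set B. length r = n" "length z = n" "\<forall>j<n. z!j = 0"
    "length B = m"
  shows "mat_of_rows_list m A * mat_of_rows_list n B = mat_of_rows_list n (map (\<lambda>r. lvm z r B) A)"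
proof (rule eq_matI)
  fix i j assume ij: "i < dim_row (mat_of_rows_list n (map (\<lambda>r. lvm z r B) A))"
     "j < dim_col (mat_of_rows_list n (map (\<lambda>r. lvm z r B) A))"
  then have i: "i < length A" and j: "j < n" by (auto simp: mat_of_rows_list_def)
  have "(mat_of_rows_list m A * mat_of_rows_list n B) $$ (i,j) = (\<Sum>k<length B. A!i!k * B!k!j)"
    using i j assms by (simp add: mat_of_rows_list_def scalar_prod_def atLeast0LessThan)
  also have "\<dots> = lvm z (A!i) B ! j" using assms i j by (subst lvm_nth) auto
  finally show "(mat_of_rows_list m A * mat_of_rows_list n B) $$ (i,j) = mat_of_rows_list n (map (\<lambda>r. lvm z r B) A) $$ (i,j)"
    using i j by (simp add: mat_of_rows_list_def)
qed (auto simp: mat_of_rows_list_def)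

primrec wprod :: "nat \<Rightarrow> ('l \<Rightarrow> complex mat) \<Rightarrow> 'l list \<Rightarrow> complex mat" where
  "wprod n f [] = 1\<^sub>m n"
| "wprod n f (l#w) = f l * wprod n f w"

lemma wprod_carrier: "(\<And>l. f l \<in> carrier_mat n n) \<Longrightarrow> wprod n f w \<in> carrier_mat n n"
  by (induction w) (auto intro: mult_carrier_mat)

lemma wprod_append: "(\<And>l. f l \<in> carrier_mat n n) \<Longrightarrow> wprod n f (u @ v) = wprod n f u * wprod n f v"
proof (induction u)
  case Nil then show ?case using wprod_carrier[of f n v] by simp
next
  case (Cons l u) then show ?case
    using wprod_carrier[of f n v] wprod_carrier[of f n u] by (simp add: assoc_mult_mat[of _ n n _ n _ n])
qed

lemma wprod_rev:
  assumes "\<And>l. f l \<in> carrier_mat n n" "\<And>l. l \<in> A \<Longrightarrow> f l * f l = 1\<^sub>m n" "set w \<subseteq> A"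
  shows "wprod n f (rev w) * wprod n f w = 1\<^sub>m n"
  using assms(3)
proof (induction w)
  case (Cons l w)
  have c: "\<And>u. wprod n f u \<in> carrier_mat n n" using assms(1) by (rule wprod_carrier)
  have r: "wprod n f (rev (l#w)) = wprod n f (rev w) * f l"
    using assms(1) right_mult_one_mat[OF assms(1)[of l]] by (simp add: wprod_append)
  have "wprod n f (rev (l#w)) * wprod n f (l#w) = wprod n f (rev w) * f l * (f l * wprod n f w)"
    unfolding r by simp
  also have "\<dots> = wprod n f (rev w) * (f l * (f l * wprod n f w))"
    by (rule assoc_mult_mat[OF c assms(1) mult_carrier_mat[OF assms(1) c]])
  also have "f l * (f l * wprod n f w) = (f l * f l) * wprod n f w"
    by (rule assoc_mult_mat[OF assms(1) assms(1) c, symmetric])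
  also have "(f l * f l) * wprod n f w = wprod n f w"
    using assms Cons.prems left_mult_one_mat[OF c] by simp
  finally show ?case using Cons by simp
qed simp

lemma GLm_simps[simp]: "mult (GLm n) = (*)" "one (GLm n) = 1\<^sub>m n"
  "carrier (GLm n) = {A \<in> carrier_mat n n. invertible_mat A}"
  by (simp_all add: GLm_def)

lemma gen_grp_simps[simp]: "mult (gen_grp n S) = (*)" "one (gen_grp n S) = 1\<^sub>m n"
  "carrier (gen_grp n S) = generate (GLm n) S"
  by (simp_all add: gen_grp_def GLm_def)

lemma inv_GLm:
  assumes "x \<in> carrier_mat n n" "z \<in> carrier_mat n n" "x * z = 1\<^sub>m n" "z * x = 1\<^sub>m n"
  shows "inv\<^bsub>GLm n\<^esub> x = z"
  unfolding m_inv_def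
proof (rule the_equality)
  show "z \<in> carrier (GLm n) \<and> x \<otimes>\<^bsub>GLm n\<^esub> z = \<one>\<^bsub>GLm n\<^esub> \<and> z \<otimes>\<^bsub>GLm n\<^esub> x = \<one>\<^bsub>GLm n\<^esub>"
    using assms by (auto simp: invertible_mat_def inverts_mat_def square_mat.simps)
  fix y assume "y \<in> carrier (GLm n) \<and> x \<otimes>\<^bsub>GLm n\<^esub> y = \<one>\<^bsub>GLm n\<^esub> \<and> y \<otimes>\<^bsub>GLm n\<^esub> x = \<one>\<^bsub>GLm n\<^esub>"
  then have y: "y \<in> carrier_mat n n" "x * y = 1\<^sub>m n" by auto
  have "y = (z * x) * y" using y assms by simp
  also have "\<dots> = z * (x * y)" by (rule assoc_mult_mat[OF assms(2,1) y(1)])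
  also have "\<dots> = z" using y assms by simp
  finally show "y = z" .
qed

lemma gen_sub:
  assumes "\<And>s. s \<in> S \<Longrightarrow> s \<in> Wd \<and> inv\<^bsub>GLm n\<^esub> s \<in> Wd" "1\<^sub>m n \<in> Wd"
    "\<And>a b. a \<in> Wd \<Longrightarrow> b \<in> Wd \<Longrightarrow> a * b \<in> Wd"
  shows "generate (GLm n) S \<subseteq> Wd"
proof
  fix x assume "x \<in> generate (GLm n) S"
  then show "x \<in> Wd" by (induction rule: generate.induct) (use assms in auto)
qed

lemma gen_words:
  assumes "\<And>l. f l \<in> carrier_mat n n" "\<And>l. l \<in> A \<Longrightarrow> f l * f l = 1\<^sub>m n"
  shows "generate (GLm n) (f ` A) = wprod n f ` {w. set w \<subseteq> A}"
proof
  show "generate (GLm n) (f ` A) \<subseteq> wprod n f ` {w. set w \<subseteq> A}"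
  proof (rule gen_sub)
    fix s assume "s \<in> f ` A"
    then obtain l where l: "l \<in> A" "s = f l" by auto
    have "s = wprod n f [l]" using l right_mult_one_mat[OF assms(1)[of l]] by simp
    moreover have "inv\<^bsub>GLm n\<^esub> s = s" using l assms by (intro inv_GLm) auto
    ultimately show "s \<in> wprod n f ` {w. set w \<subseteq> A} \<and> inv\<^bsub>GLm n\<^esub> s \<in> wprod n f ` {w. set w \<subseteq> A}"
      using l by (auto intro!: image_eqI[of _ _ "[l]"])
  next
    show "1\<^sub>m n \<in> wprod n f ` {w. set w \<subseteq> A}" by (auto intro!: image_eqI[of _ _ "[]"])
  next
    fix a b assume "a \<in> wprod n f ` {w. set w \<subseteq> A}" "b \<in> wprod n f ` {w. set w \<subseteq> A}"
    then obtain u v where "a = wprod n f u" "b = wprod n f v" "set u \<subseteq> A" "set v \<subseteq> A" by auto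
    then show "a * b \<in> wprod n f ` {w. set w \<subseteq> A}"
      using assms by (auto simp: wprod_append intro!: image_eqI[of _ _ "u @ v"])
  qed
next
  show "wprod n f ` {w. set w \<subseteq> A} \<subseteq> generate (GLm n) (f ` A)"
  proof
    fix x assume "x \<in> wprod n f ` {w. set w \<subseteq> A}"
    then obtain w where w: "x = wprod n f w" "set w \<subseteq> A" by auto
    have "wprod n f w \<in> generate (GLm n) (f ` A)" using w(2)
    proof (induction w)
      case Nil show ?case using generate.one[of "GLm n" "f ` A"] by simp
    next
      case (Cons l w)
      then have "f l \<in> generate (GLm n) (f ` A)" by (auto intro: generate.incl)
      from generate.eng[OF this Cons.IH] Cons.prems show ?case by simp
    qed
    then show "x \<in> generate (GLm n) (f ` A)" using w by simp
  qed
qed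


lemma mrl_dims[simp]: "dim_row (mat_of_rows_list n rs) = length rs" "dim_col (mat_of_rows_list n rs) = n"
  by (simp_all add: mat_of_rows_list_def)

lemma less8: "(i::nat) < 8 \<longleftrightarrow> i = 0 \<or> i = 1 \<or> i = 2 \<or> i = 3 \<or> i = 4 \<or> i = 5 \<or> i = 6 \<or> i = 7"
  by auto

lemma less7: "(i::nat) < 7 \<longleftrightarrow> i = 0 \<or> i = 1 \<or> i = 2 \<or> i = 3 \<or> i = 4 \<or> i = 5 \<or> i = 6"
  by auto

lemma mrl_mult_8:
  assumes "\<forall>r\<in>set A. length r = length B" "\<forall>r\<in>set B. length r = 8" "length B = m"
  shows "mat_of_rows_list m A * mat_of_rows_list 8 B = mat_of_rows_list 8 (map (\<lambda>r. lvm [0,0,0,0,0,0,0,0] r B) A)"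
  by (rule mrl_mult) (use assms in \<open>auto simp: less8\<close>)

lemma mrl_mult_7:
  assumes "\<forall>r\<in>set A. length r = length B" "\<forall>r\<in>set B. length r = 7" "length B = m"
  shows "mat_of_rows_list m A * mat_of_rows_list 7 B = mat_of_rows_list 7 (map (\<lambda>r. lvm [0,0,0,0,0,0,0] r B) A)"
  by (rule mrl_mult) (use assms in \<open>auto simp: less7\<close>)

lemma mrl_mult_1:
  assumes "\<forall>r\<in>set A. length r = length B" "\<forall>r\<in>set B. length r = Suc 0" "length B = m"
  shows "mat_of_rows_list m A * mat_of_rows_list (Suc 0) B = mat_of_rows_list (Suc 0) (map (\<lambda>r. lvm [0] r B) A)"
  by (rule mrl_mult) (use assms in auto)

fun madd :: "complex list list \<Rightarrow> complex list list \<Rightarrow> complex list list" where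
  "madd (a#as) (b#bs) = vadd a b # madd as bs"
| "madd _ _ = []"

lemma madd_length[simp]: "length (madd A B) = min (length A) (length B)"
  by (induction A B rule: madd.induct) auto

lemma madd_nth: "i < length A \<Longrightarrow> i < length B \<Longrightarrow> madd A B ! i = vadd (A!i) (B!i)"
proof (induction A B arbitrary: i rule: madd.induct)
  case (1 a as b bs) then show ?case by (cases i) auto
qed auto

lemma mrl_add:
  assumes "length A = length B" "\<forall>r\<in>set A. length r = n" "\<forall>r\<in>set B. length r = n"
  shows "mat_of_rows_list n A + mat_of_rows_list n B = mat_of_rows_list n (madd A B)"
proof (rule eq_matI)
  fix i j assume "i < dim_row (mat_of_rows_list n (madd A B))" "j < dim_col (mat_of_rows_list n (madd A B))"
  then have i: "i < length A" "i < length B" and j: "j < n" using assms by auto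
  then show "(mat_of_rows_list n A + mat_of_rows_list n B) $$ (i, j) = mat_of_rows_list n (madd A B) $$ (i, j)"
    using assms by (simp add: mat_of_rows_list_def madd_nth vadd_nth)
qed (use assms in auto)

lemma mrl_carrier': "length rs = m \<Longrightarrow> mat_of_rows_list n rs \<in> carrier_mat m n"
  using mrl_carrier[of n rs] by metis

lemma mrl_row: "i < length rs \<Longrightarrow> length (rs!i) = n \<Longrightarrow> row (mat_of_rows_list n rs) i = vec_of_list (rs!i)"
  by (rule eq_vecI) (simp_all add: mat_of_rows_list_def vec_of_list_index)

lemma right_one_sq[simp]: "(A :: complex mat) \<in> carrier_mat n n \<Longrightarrow> A * 1\<^sub>m n = A" by (erule right_mult_one_mat)
lemma left_one_sq[simp]: "(A :: complex mat) \<in> carrier_mat n n \<Longrightarrow> 1\<^sub>m n * A = A" by (erule left_mult_one_mat)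
lemma tmat_carrier[simp]: "tmat n i j \<in> carrier_mat n n" by (simp add: tmat_def)

datatype P = P0 | P1 | P2 | P3 | P4 | P5 | P6 | P7 | P8 | P9 | P10 | P11 | P12 | P13 | P14 | P15 | P16 | P17 | P18 | P19 | P20 | P21 | P22 | P23 | P24 | P25 | P26 | P27 | P28 | P29 | P30 | P31 | P32 | P33 | P34 | P35 | P36 | P37 | P38 | P39 | P40 | P41 | P42 | P43 | P44 | P45 | P46 | P47 | P48 | P49 | P50 | P51 | P52 | P53 | P54 | P55

datatype L = T23 | T34 | T45 | T56 | T67 | T78 | LX | LS

primrec actT23 :: "P \<Rightarrow> P" where
  "actT23 P0 = P1"
| "actT23 P1 = P0"
| "actT23 P2 = P2"
| "actT23 P3 = P3"
| "actT23 P4 = P4"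
| "actT23 P5 = P8"
| "actT23 P6 = P6"
| "actT23 P7 = P14"
| "actT23 P8 = P5"
| "actT23 P9 = P9"
| "actT23 P10 = P13"
| "actT23 P11 = P11"
| "actT23 P12 = P22"
| "actT23 P13 = P10"
| "actT23 P14 = P7"
| "actT23 P15 = P25"
| "actT23 P16 = P16"
| "actT23 P17 = P17"
| "actT23 P18 = P18"
| "actT23 P19 = P21"
| "actT23 P20 = P20"
| "actT23 P21 = P19"
| "actT23 P22 = P12"
| "actT23 P23 = P23"
| "actT23 P24 = P24"
| "actT23 P25 = P15"
| "actT23 P26 = P37"
| "actT23 P27 = P27"
| "actT23 P28 = P28"
| "actT23 P29 = P29"
| "actT23 P30 = P33"
| "actT23 P31 = P31"
| "actT23 P32 = P32"
| "actT23 P33 = P30"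
| "actT23 P34 = P34"
| "actT23 P35 = P35"
| "actT23 P36 = P48"
| "actT23 P37 = P26"
| "actT23 P38 = P38"
| "actT23 P39 = P49"
| "actT23 P40 = P40"
| "actT23 P41 = P41"
| "actT23 P42 = P42"
| "actT23 P43 = P45"
| "actT23 P44 = P44"
| "actT23 P45 = P43"
| "actT23 P46 = P46"
| "actT23 P47 = P47"
| "actT23 P48 = P36"
| "actT23 P49 = P39"
| "actT23 P50 = P50"
| "actT23 P51 = P51"
| "actT23 P52 = P52"
| "actT23 P53 = P53"
| "actT23 P54 = P54"
| "actT23 P55 = P55"

primrec actT34 :: "P \<Rightarrow> P" where
  "actT34 P0 = P0"
| "actT34 P1 = P3"
| "actT34 P2 = P5"
| "actT34 P3 = P1"
| "actT34 P4 = P7"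
| "actT34 P5 = P2"
| "actT34 P6 = P6"
| "actT34 P7 = P4"
| "actT34 P8 = P8"
| "actT34 P9 = P15"
| "actT34 P10 = P10"
| "actT34 P11 = P11"
| "actT34 P12 = P12"
| "actT34 P13 = P24"
| "actT34 P14 = P14"
| "actT34 P15 = P9"
| "actT34 P16 = P16"
| "actT34 P17 = P17"
| "actT34 P18 = P26"
| "actT34 P19 = P19"
| "actT34 P20 = P20"
| "actT34 P21 = P34"
| "actT34 P22 = P35"
| "actT34 P23 = P36"
| "actT34 P24 = P13"
| "actT34 P25 = P25"
| "actT34 P26 = P18"
| "actT34 P27 = P27"
| "actT34 P28 = P28"
| "actT34 P29 = P39"
| "actT34 P30 = P30"
| "actT34 P31 = P31"
| "actT34 P32 = P32"
| "actT34 P33 = P46"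
| "actT34 P34 = P21"
| "actT34 P35 = P22"
| "actT34 P36 = P23"
| "actT34 P37 = P37"
| "actT34 P38 = P38"
| "actT34 P39 = P29"
| "actT34 P40 = P40"
| "actT34 P41 = P41"
| "actT34 P42 = P42"
| "actT34 P43 = P43"
| "actT34 P44 = P44"
| "actT34 P45 = P52"
| "actT34 P46 = P33"
| "actT34 P47 = P47"
| "actT34 P48 = P48"
| "actT34 P49 = P49"
| "actT34 P50 = P50"
| "actT34 P51 = P51"
| "actT34 P52 = P45"
| "actT34 P53 = P53"
| "actT34 P54 = P54"
| "actT34 P55 = P55"

primrec actT45 :: "P \<Rightarrow> P" where
  "actT45 P0 = P0"
| "actT45 P1 = P1"
| "actT45 P2 = P2"
| "actT45 P3 = P6"
| "actT45 P4 = P4"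
| "actT45 P5 = P10"
| "actT45 P6 = P3"
| "actT45 P7 = P12"
| "actT45 P8 = P13"
| "actT45 P9 = P17"
| "actT45 P10 = P5"
| "actT45 P11 = P11"
| "actT45 P12 = P7"
| "actT45 P13 = P8"
| "actT45 P14 = P22"
| "actT45 P15 = P15"
| "actT45 P16 = P23"
| "actT45 P17 = P9"
| "actT45 P18 = P28"
| "actT45 P19 = P19"
| "actT45 P20 = P20"
| "actT45 P21 = P21"
| "actT45 P22 = P14"
| "actT45 P23 = P16"
| "actT45 P24 = P24"
| "actT45 P25 = P25"
| "actT45 P26 = P26"
| "actT45 P27 = P27"
| "actT45 P28 = P18"
| "actT45 P29 = P42"
| "actT45 P30 = P30"
| "actT45 P31 = P31"
| "actT45 P32 = P32"
| "actT45 P33 = P33"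
| "actT45 P34 = P47"
| "actT45 P35 = P35"
| "actT45 P36 = P36"
| "actT45 P37 = P37"
| "actT45 P38 = P38"
| "actT45 P39 = P39"
| "actT45 P40 = P40"
| "actT45 P41 = P41"
| "actT45 P42 = P29"
| "actT45 P43 = P43"
| "actT45 P44 = P44"
| "actT45 P45 = P45"
| "actT45 P46 = P53"
| "actT45 P47 = P34"
| "actT45 P48 = P48"
| "actT45 P49 = P49"
| "actT45 P50 = P50"
| "actT45 P51 = P51"
| "actT45 P52 = P55"
| "actT45 P53 = P46"
| "actT45 P54 = P54"
| "actT45 P55 = P52"

primrec actT56 :: "P \<Rightarrow> P" where
  "actT56 P0 = P0"
| "actT56 P1 = P1"
| "actT56 P2 = P2"
| "actT56 P3 = P3"
| "actT56 P4 = P9"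
| "actT56 P5 = P5"
| "actT56 P6 = P11"
| "actT56 P7 = P15"
| "actT56 P8 = P8"
| "actT56 P9 = P4"
| "actT56 P10 = P19"
| "actT56 P11 = P6"
| "actT56 P12 = P12"
| "actT56 P13 = P21"
| "actT56 P14 = P25"
| "actT56 P15 = P7"
| "actT56 P16 = P27"
| "actT56 P17 = P17"
| "actT56 P18 = P18"
| "actT56 P19 = P10"
| "actT56 P20 = P20"
| "actT56 P21 = P13"
| "actT56 P22 = P22"
| "actT56 P23 = P23"
| "actT56 P24 = P34"
| "actT56 P25 = P14"
| "actT56 P26 = P26"
| "actT56 P27 = P16"
| "actT56 P28 = P41"
| "actT56 P29 = P29"
| "actT56 P30 = P30"
| "actT56 P31 = P31"
| "actT56 P32 = P32"
| "actT56 P33 = P33"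
| "actT56 P34 = P24"
| "actT56 P35 = P35"
| "actT56 P36 = P36"
| "actT56 P37 = P37"
| "actT56 P38 = P38"
| "actT56 P39 = P39"
| "actT56 P40 = P40"
| "actT56 P41 = P28"
| "actT56 P42 = P44"
| "actT56 P43 = P43"
| "actT56 P44 = P42"
| "actT56 P45 = P45"
| "actT56 P46 = P46"
| "actT56 P47 = P47"
| "actT56 P48 = P48"
| "actT56 P49 = P49"
| "actT56 P50 = P55"
| "actT56 P51 = P51"
| "actT56 P52 = P52"
| "actT56 P53 = P54"
| "actT56 P54 = P53"
| "actT56 P55 = P50"

primrec actT67 :: "P \<Rightarrow> P" where
  "actT67 P0 = P0"
| "actT67 P1 = P1"
| "actT67 P2 = P2"
| "actT67 P3 = P3"
| "actT67 P4 = P4"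
| "actT67 P5 = P5"
| "actT67 P6 = P6"
| "actT67 P7 = P7"
| "actT67 P8 = P8"
| "actT67 P9 = P18"
| "actT67 P10 = P10"
| "actT67 P11 = P20"
| "actT67 P12 = P12"
| "actT67 P13 = P13"
| "actT67 P14 = P14"
| "actT67 P15 = P26"
| "actT67 P16 = P16"
| "actT67 P17 = P28"
| "actT67 P18 = P9"
| "actT67 P19 = P30"
| "actT67 P20 = P11"
| "actT67 P21 = P33"
| "actT67 P22 = P22"
| "actT67 P23 = P23"
| "actT67 P24 = P24"
| "actT67 P25 = P37"
| "actT67 P26 = P15"
| "actT67 P27 = P40"
| "actT67 P28 = P17"
| "actT67 P29 = P29"
| "actT67 P30 = P19"
| "actT67 P31 = P44"
| "actT67 P32 = P32"
| "actT67 P33 = P21"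
| "actT67 P34 = P46"
| "actT67 P35 = P35"
| "actT67 P36 = P36"
| "actT67 P37 = P25"
| "actT67 P38 = P50"
| "actT67 P39 = P39"
| "actT67 P40 = P27"
| "actT67 P41 = P41"
| "actT67 P42 = P42"
| "actT67 P43 = P43"
| "actT67 P44 = P31"
| "actT67 P45 = P45"
| "actT67 P46 = P34"
| "actT67 P47 = P53"
| "actT67 P48 = P48"
| "actT67 P49 = P49"
| "actT67 P50 = P38"
| "actT67 P51 = P51"
| "actT67 P52 = P52"
| "actT67 P53 = P47"
| "actT67 P54 = P54"
| "actT67 P55 = P55"

primrec actT78 :: "P \<Rightarrow> P" where
  "actT78 P0 = P0"
| "actT78 P1 = P1"
| "actT78 P2 = P2"
| "actT78 P3 = P3"
| "actT78 P4 = P4"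
| "actT78 P5 = P5"
| "actT78 P6 = P6"
| "actT78 P7 = P7"
| "actT78 P8 = P8"
| "actT78 P9 = P9"
| "actT78 P10 = P10"
| "actT78 P11 = P11"
| "actT78 P12 = P12"
| "actT78 P13 = P13"
| "actT78 P14 = P14"
| "actT78 P15 = P15"
| "actT78 P16 = P16"
| "actT78 P17 = P17"
| "actT78 P18 = P29"
| "actT78 P19 = P19"
| "actT78 P20 = P32"
| "actT78 P21 = P21"
| "actT78 P22 = P22"
| "actT78 P23 = P23"
| "actT78 P24 = P24"
| "actT78 P25 = P25"
| "actT78 P26 = P39"
| "actT78 P27 = P27"
| "actT78 P28 = P42"
| "actT78 P29 = P18"
| "actT78 P30 = P43"
| "actT78 P31 = P31"
| "actT78 P32 = P20"
| "actT78 P33 = P45"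
| "actT78 P34 = P34"
| "actT78 P35 = P35"
| "actT78 P36 = P36"
| "actT78 P37 = P49"
| "actT78 P38 = P38"
| "actT78 P39 = P26"
| "actT78 P40 = P51"
| "actT78 P41 = P44"
| "actT78 P42 = P28"
| "actT78 P43 = P30"
| "actT78 P44 = P41"
| "actT78 P45 = P33"
| "actT78 P46 = P52"
| "actT78 P47 = P47"
| "actT78 P48 = P48"
| "actT78 P49 = P37"
| "actT78 P50 = P54"
| "actT78 P51 = P40"
| "actT78 P52 = P46"
| "actT78 P53 = P55"
| "actT78 P54 = P50"
| "actT78 P55 = P53"

primrec actLX :: "P \<Rightarrow> P" where
  "actLX P0 = P0"
| "actLX P1 = P4"
| "actLX P2 = P2"
| "actLX P3 = P7"
| "actLX P4 = P1"
| "actLX P5 = P5"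
| "actLX P6 = P12"
| "actLX P7 = P3"
| "actLX P8 = P16"
| "actLX P9 = P9"
| "actLX P10 = P10"
| "actLX P11 = P11"
| "actLX P12 = P6"
| "actLX P13 = P23"
| "actLX P14 = P14"
| "actLX P15 = P15"
| "actLX P16 = P8"
| "actLX P17 = P17"
| "actLX P18 = P18"
| "actLX P19 = P31"
| "actLX P20 = P20"
| "actLX P21 = P21"
| "actLX P22 = P22"
| "actLX P23 = P13"
| "actLX P24 = P36"
| "actLX P25 = P38"
| "actLX P26 = P26"
| "actLX P27 = P27"
| "actLX P28 = P28"
| "actLX P29 = P29"
| "actLX P30 = P44"
| "actLX P31 = P19"
| "actLX P32 = P32"
| "actLX P33 = P33"
| "actLX P34 = P34"
| "actLX P35 = P35"
| "actLX P36 = P24"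
| "actLX P37 = P50"
| "actLX P38 = P25"
| "actLX P39 = P39"
| "actLX P40 = P40"
| "actLX P41 = P43"
| "actLX P42 = P42"
| "actLX P43 = P41"
| "actLX P44 = P30"
| "actLX P45 = P45"
| "actLX P46 = P46"
| "actLX P47 = P47"
| "actLX P48 = P48"
| "actLX P49 = P54"
| "actLX P50 = P37"
| "actLX P51 = P51"
| "actLX P52 = P52"
| "actLX P53 = P53"
| "actLX P54 = P49"
| "actLX P55 = P55"

primrec actLS :: "P \<Rightarrow> P" where
  "actLS P0 = P2"
| "actLS P1 = P1"
| "actLS P2 = P0"
| "actLS P3 = P8"
| "actLS P4 = P4"
| "actLS P5 = P5"
| "actLS P6 = P13"
| "actLS P7 = P16"
| "actLS P8 = P3"
| "actLS P9 = P9"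
| "actLS P10 = P10"
| "actLS P11 = P21"
| "actLS P12 = P23"
| "actLS P13 = P6"
| "actLS P14 = P14"
| "actLS P15 = P27"
| "actLS P16 = P7"
| "actLS P17 = P17"
| "actLS P18 = P18"
| "actLS P19 = P19"
| "actLS P20 = P33"
| "actLS P21 = P11"
| "actLS P22 = P22"
| "actLS P23 = P12"
| "actLS P24 = P24"
| "actLS P25 = P25"
| "actLS P26 = P40"
| "actLS P27 = P15"
| "actLS P28 = P28"
| "actLS P29 = P29"
| "actLS P30 = P30"
| "actLS P31 = P31"
| "actLS P32 = P45"
| "actLS P33 = P20"
| "actLS P34 = P34"
| "actLS P35 = P48"
| "actLS P36 = P36"
| "actLS P37 = P37"
| "actLS P38 = P38"
| "actLS P39 = P51"
| "actLS P40 = P26"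
| "actLS P41 = P41"
| "actLS P42 = P42"
| "actLS P43 = P43"
| "actLS P44 = P44"
| "actLS P45 = P32"
| "actLS P46 = P46"
| "actLS P47 = P47"
| "actLS P48 = P35"
| "actLS P49 = P49"
| "actLS P50 = P50"
| "actLS P51 = P39"
| "actLS P52 = P52"
| "actLS P53 = P53"
| "actLS P54 = P54"
| "actLS P55 = P55"

definition act :: "L \<Rightarrow> P \<Rightarrow> P" where
  "act l = (case l of T23 \<Rightarrow> actT23 | T34 \<Rightarrow> actT34 | T45 \<Rightarrow> actT45 | T56 \<Rightarrow> actT56 | T67 \<Rightarrow> actT67 | T78 \<Rightarrow> actT78 | LX \<Rightarrow> actLX | LS \<Rightarrow> actLS)"

primrec vecp :: "P \<Rightarrow> complex list" where
  "vecp P0 = [0, 1, 0, 0, 0, 0, 0, 0]"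
| "vecp P1 = [0, 0, 1, 0, 0, 0, 0, 0]"
| "vecp P2 = [-1, 1, 1, 0, 0, 0, 0, 0]"
| "vecp P3 = [0, 0, 0, 1, 0, 0, 0, 0]"
| "vecp P4 = [-1/2, 1/2, 1/2, -1/2, -1/2, 1/2, 1/2, 1/2]"
| "vecp P5 = [-1, 1, 0, 1, 0, 0, 0, 0]"
| "vecp P6 = [0, 0, 0, 0, 1, 0, 0, 0]"
| "vecp P7 = [-1/2, 1/2, -1/2, 1/2, -1/2, 1/2, 1/2, 1/2]"
| "vecp P8 = [-1, 0, 1, 1, 0, 0, 0, 0]"
| "vecp P9 = [-1/2, 1/2, 1/2, -1/2, 1/2, -1/2, 1/2, 1/2]"
| "vecp P10 = [-1, 1, 0, 0, 1, 0, 0, 0]"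
| "vecp P11 = [0, 0, 0, 0, 0, 1, 0, 0]"
| "vecp P12 = [-1/2, 1/2, -1/2, -1/2, 1/2, 1/2, 1/2, 1/2]"
| "vecp P13 = [-1, 0, 1, 0, 1, 0, 0, 0]"
| "vecp P14 = [-1/2, -1/2, 1/2, 1/2, -1/2, 1/2, 1/2, 1/2]"
| "vecp P15 = [-1/2, 1/2, -1/2, 1/2, 1/2, -1/2, 1/2, 1/2]"
| "vecp P16 = [-3/2, 1/2, 1/2, 1/2, -1/2, 1/2, 1/2, 1/2]"
| "vecp P17 = [-1/2, 1/2, 1/2, 1/2, -1/2, -1/2, 1/2, 1/2]"
| "vecp P18 = [-1/2, 1/2, 1/2, -1/2, 1/2, 1/2, -1/2, 1/2]"
| "vecp P19 = [-1, 1, 0, 0, 0, 1, 0, 0]"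
| "vecp P20 = [0, 0, 0, 0, 0, 0, 1, 0]"
| "vecp P21 = [-1, 0, 1, 0, 0, 1, 0, 0]"
| "vecp P22 = [-1/2, -1/2, 1/2, -1/2, 1/2, 1/2, 1/2, 1/2]"
| "vecp P23 = [-3/2, 1/2, 1/2, -1/2, 1/2, 1/2, 1/2, 1/2]"
| "vecp P24 = [-1, 0, 0, 1, 1, 0, 0, 0]"
| "vecp P25 = [-1/2, -1/2, 1/2, 1/2, 1/2, -1/2, 1/2, 1/2]"
| "vecp P26 = [-1/2, 1/2, -1/2, 1/2, 1/2, 1/2, -1/2, 1/2]"
| "vecp P27 = [-3/2, 1/2, 1/2, 1/2, 1/2, -1/2, 1/2, 1/2]"
| "vecp P28 = [-1/2, 1/2, 1/2, 1/2, -1/2, 1/2, -1/2, 1/2]"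
| "vecp P29 = [-1/2, 1/2, 1/2, -1/2, 1/2, 1/2, 1/2, -1/2]"
| "vecp P30 = [-1, 1, 0, 0, 0, 0, 1, 0]"
| "vecp P31 = [-1/2, 1/2, 1/2, 1/2, 1/2, 1/2, -1/2, -1/2]"
| "vecp P32 = [0, 0, 0, 0, 0, 0, 0, 1]"
| "vecp P33 = [-1, 0, 1, 0, 0, 0, 1, 0]"
| "vecp P34 = [-1, 0, 0, 1, 0, 1, 0, 0]"
| "vecp P35 = [-1/2, -1/2, -1/2, 1/2, 1/2, 1/2, 1/2, 1/2]"
| "vecp P36 = [-3/2, 1/2, -1/2, 1/2, 1/2, 1/2, 1/2, 1/2]"
| "vecp P37 = [-1/2, -1/2, 1/2, 1/2, 1/2, 1/2, -1/2, 1/2]"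
| "vecp P38 = [-1, 0, 0, 0, 0, 0, 1, 1]"
| "vecp P39 = [-1/2, 1/2, -1/2, 1/2, 1/2, 1/2, 1/2, -1/2]"
| "vecp P40 = [-3/2, 1/2, 1/2, 1/2, 1/2, 1/2, -1/2, 1/2]"
| "vecp P41 = [-1/2, 1/2, 1/2, 1/2, 1/2, -1/2, -1/2, 1/2]"
| "vecp P42 = [-1/2, 1/2, 1/2, 1/2, -1/2, 1/2, 1/2, -1/2]"
| "vecp P43 = [-1, 1, 0, 0, 0, 0, 0, 1]"
| "vecp P44 = [-1/2, 1/2, 1/2, 1/2, 1/2, -1/2, 1/2, -1/2]"
| "vecp P45 = [-1, 0, 1, 0, 0, 0, 0, 1]"
| "vecp P46 = [-1, 0, 0, 1, 0, 0, 1, 0]"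
| "vecp P47 = [-1, 0, 0, 0, 1, 1, 0, 0]"
| "vecp P48 = [-3/2, -1/2, 1/2, 1/2, 1/2, 1/2, 1/2, 1/2]"
| "vecp P49 = [-1/2, -1/2, 1/2, 1/2, 1/2, 1/2, 1/2, -1/2]"
| "vecp P50 = [-1, 0, 0, 0, 0, 1, 0, 1]"
| "vecp P51 = [-3/2, 1/2, 1/2, 1/2, 1/2, 1/2, 1/2, -1/2]"
| "vecp P52 = [-1, 0, 0, 1, 0, 0, 0, 1]"
| "vecp P53 = [-1, 0, 0, 0, 1, 0, 1, 0]"
| "vecp P54 = [-1, 0, 0, 0, 0, 1, 1, 0]"
| "vecp P55 = [-1, 0, 0, 0, 1, 0, 0, 1]"


primrec rows8 :: "L \<Rightarrow> complex list list" where
  "rows8 T23 = [[1, 0, 0, 0, 0, 0, 0, 0],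
    [0, 0, 1, 0, 0, 0, 0, 0],
    [0, 1, 0, 0, 0, 0, 0, 0],
    [0, 0, 0, 1, 0, 0, 0, 0],
    [0, 0, 0, 0, 1, 0, 0, 0],
    [0, 0, 0, 0, 0, 1, 0, 0],
    [0, 0, 0, 0, 0, 0, 1, 0],
    [0, 0, 0, 0, 0, 0, 0, 1]]"
| "rows8 T34 = [[1, 0, 0, 0, 0, 0, 0, 0],
    [0, 1, 0, 0, 0, 0, 0, 0],
    [0, 0, 0, 1, 0, 0, 0, 0],
    [0, 0, 1, 0, 0, 0, 0, 0],
    [0, 0, 0, 0, 1, 0, 0, 0],
    [0, 0, 0, 0, 0, 1, 0, 0],
    [0, 0, 0, 0, 0, 0, 1, 0],
    [0, 0, 0, 0, 0, 0, 0, 1]]"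
| "rows8 T45 = [[1, 0, 0, 0, 0, 0, 0, 0],
    [0, 1, 0, 0, 0, 0, 0, 0],
    [0, 0, 1, 0, 0, 0, 0, 0],
    [0, 0, 0, 0, 1, 0, 0, 0],
    [0, 0, 0, 1, 0, 0, 0, 0],
    [0, 0, 0, 0, 0, 1, 0, 0],
    [0, 0, 0, 0, 0, 0, 1, 0],
    [0, 0, 0, 0, 0, 0, 0, 1]]"
| "rows8 T56 = [[1, 0, 0, 0, 0, 0, 0, 0],
    [0, 1, 0, 0, 0, 0, 0, 0],
    [0, 0, 1, 0, 0, 0, 0, 0],
    [0, 0, 0, 1, 0, 0, 0, 0],
    [0, 0, 0, 0, 0, 1, 0, 0],
    [0, 0, 0, 0, 1, 0, 0, 0],
    [0, 0, 0, 0, 0, 0, 1, 0],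
    [0, 0, 0, 0, 0, 0, 0, 1]]"
| "rows8 T67 = [[1, 0, 0, 0, 0, 0, 0, 0],
    [0, 1, 0, 0, 0, 0, 0, 0],
    [0, 0, 1, 0, 0, 0, 0, 0],
    [0, 0, 0, 1, 0, 0, 0, 0],
    [0, 0, 0, 0, 1, 0, 0, 0],
    [0, 0, 0, 0, 0, 0, 1, 0],
    [0, 0, 0, 0, 0, 1, 0, 0],
    [0, 0, 0, 0, 0, 0, 0, 1]]"
| "rows8 T78 = [[1, 0, 0, 0, 0, 0, 0, 0],
    [0, 1, 0, 0, 0, 0, 0, 0],
    [0, 0, 1, 0, 0, 0, 0, 0],
    [0, 0, 0, 1, 0, 0, 0, 0],
    [0, 0, 0, 0, 1, 0, 0, 0],
    [0, 0, 0, 0, 0, 1, 0, 0],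
    [0, 0, 0, 0, 0, 0, 0, 1],
    [0, 0, 0, 0, 0, 0, 1, 0]]"
| "rows8 LX = [[1/2, 1/2, -1/2, -1/2, -1/2, 1/2, 1/2, 1/2],
    [0, 1, 0, 0, 0, 0, 0, 0],
    [-1/2, 1/2, 1/2, -1/2, -1/2, 1/2, 1/2, 1/2],
    [-1/2, 1/2, -1/2, 1/2, -1/2, 1/2, 1/2, 1/2],
    [-1/2, 1/2, -1/2, -1/2, 1/2, 1/2, 1/2, 1/2],
    [0, 0, 0, 0, 0, 1, 0, 0],
    [0, 0, 0, 0, 0, 0, 1, 0],
    [0, 0, 0, 0, 0, 0, 0, 1]]"
| "rows8 LS = [[-1, 0, 2, 0, 0, 0, 0, 0],
    [-1, 1, 1, 0, 0, 0, 0, 0],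
    [0, 0, 1, 0, 0, 0, 0, 0],
    [-1, 0, 1, 1, 0, 0, 0, 0],
    [-1, 0, 1, 0, 1, 0, 0, 0],
    [-1, 0, 1, 0, 0, 1, 0, 0],
    [-1, 0, 1, 0, 0, 0, 1, 0],
    [-1, 0, 1, 0, 0, 0, 0, 1]]"

lemma tmat8_23: "tmat 8 2 3 = mat_of_rows_list 8 [[1, 0, 0, 0, 0, 0, 0, 0],
    [0, 0, 1, 0, 0, 0, 0, 0],
    [0, 1, 0, 0, 0, 0, 0, 0],
    [0, 0, 0, 1, 0, 0, 0, 0],
    [0, 0, 0, 0, 1, 0, 0, 0],
    [0, 0, 0, 0, 0, 1, 0, 0],
    [0, 0, 0, 0, 0, 0, 1, 0],
    [0, 0, 0, 0, 0, 0, 0, 1]]"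
proof (rule eq_matI)
  fix i j assume "i < dim_row (mat_of_rows_list 8 [[1, 0, 0, 0, 0, 0, 0, 0],
    [0, 0, 1, 0, 0, 0, 0, 0],
    [0, 1, 0, 0, 0, 0, 0, 0],
    [0, 0, 0, 1, 0, 0, 0, 0],
    [0, 0, 0, 0, 1, 0, 0, 0],
    [0, 0, 0, 0, 0, 1, 0, 0],
    [0, 0, 0, 0, 0, 0, 1, 0],
    [0, 0, 0, 0, 0, 0, 0, 1]])" "j < dim_col (mat_of_rows_list 8 [[1, 0, 0, 0, 0, 0, 0, 0],
    [0, 0, 1, 0, 0, 0, 0, 0],
    [0, 1, 0, 0, 0, 0, 0, 0],
    [0, 0, 0, 1, 0, 0, 0, 0],
    [0, 0, 0, 0, 1, 0, 0, 0],
    [0, 0, 0, 0, 0, 1, 0, 0],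
    [0, 0, 0, 0, 0, 0, 1, 0],
    [0, 0, 0, 0, 0, 0, 0, 1]])"
  then have "i < 8" "j < 8" by (simp_all add: eval_nat_numeral)
  then show "tmat 8 2 3 $$ (i,j) = mat_of_rows_list 8 [[1, 0, 0, 0, 0, 0, 0, 0],
    [0, 0, 1, 0, 0, 0, 0, 0],
    [0, 1, 0, 0, 0, 0, 0, 0],
    [0, 0, 0, 1, 0, 0, 0, 0],
    [0, 0, 0, 0, 1, 0, 0, 0],
    [0, 0, 0, 0, 0, 1, 0, 0],
    [0, 0, 0, 0, 0, 0, 1, 0],
    [0, 0, 0, 0, 0, 0, 0, 1]] $$ (i,j)"
    unfolding less8 by (elim disjE) (simp_all add: tmat_def mat_of_rows_list_def)
qed (simp_all add: tmat_def mat_of_rows_list_def)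

lemma tmat8_34: "tmat 8 3 4 = mat_of_rows_list 8 [[1, 0, 0, 0, 0, 0, 0, 0],
    [0, 1, 0, 0, 0, 0, 0, 0],
    [0, 0, 0, 1, 0, 0, 0, 0],
    [0, 0, 1, 0, 0, 0, 0, 0],
    [0, 0, 0, 0, 1, 0, 0, 0],
    [0, 0, 0, 0, 0, 1, 0, 0],
    [0, 0, 0, 0, 0, 0, 1, 0],
    [0, 0, 0, 0, 0, 0, 0, 1]]"
proof (rule eq_matI)
  fix i j assume "i < dim_row (mat_of_rows_list 8 [[1, 0, 0, 0, 0, 0, 0, 0],
    [0, 1, 0, 0, 0, 0, 0, 0],
    [0, 0, 0, 1, 0, 0, 0, 0],
    [0, 0, 1, 0, 0, 0, 0, 0],
    [0, 0, 0, 0, 1, 0, 0, 0],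
    [0, 0, 0, 0, 0, 1, 0, 0],
    [0, 0, 0, 0, 0, 0, 1, 0],
    [0, 0, 0, 0, 0, 0, 0, 1]])" "j < dim_col (mat_of_rows_list 8 [[1, 0, 0, 0, 0, 0, 0, 0],
    [0, 1, 0, 0, 0, 0, 0, 0],
    [0, 0, 0, 1, 0, 0, 0, 0],
    [0, 0, 1, 0, 0, 0, 0, 0],
    [0, 0, 0, 0, 1, 0, 0, 0],
    [0, 0, 0, 0, 0, 1, 0, 0],
    [0, 0, 0, 0, 0, 0, 1, 0],
    [0, 0, 0, 0, 0, 0, 0, 1]])"
  then have "i < 8" "j < 8" by (simp_all add: eval_nat_numeral)
  then show "tmat 8 3 4 $$ (i,j) = mat_of_rows_list 8 [[1, 0, 0, 0, 0, 0, 0, 0],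
    [0, 1, 0, 0, 0, 0, 0, 0],
    [0, 0, 0, 1, 0, 0, 0, 0],
    [0, 0, 1, 0, 0, 0, 0, 0],
    [0, 0, 0, 0, 1, 0, 0, 0],
    [0, 0, 0, 0, 0, 1, 0, 0],
    [0, 0, 0, 0, 0, 0, 1, 0],
    [0, 0, 0, 0, 0, 0, 0, 1]] $$ (i,j)"
    unfolding less8 by (elim disjE) (simp_all add: tmat_def mat_of_rows_list_def)
qed (simp_all add: tmat_def mat_of_rows_list_def)

lemma tmat8_45: "tmat 8 4 5 = mat_of_rows_list 8 [[1, 0, 0, 0, 0, 0, 0, 0],
    [0, 1, 0, 0, 0, 0, 0, 0],
    [0, 0, 1, 0, 0, 0, 0, 0],
    [0, 0, 0, 0, 1, 0, 0, 0],
    [0, 0, 0, 1, 0, 0, 0, 0],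
    [0, 0, 0, 0, 0, 1, 0, 0],
    [0, 0, 0, 0, 0, 0, 1, 0],
    [0, 0, 0, 0, 0, 0, 0, 1]]"
proof (rule eq_matI)
  fix i j assume "i < dim_row (mat_of_rows_list 8 [[1, 0, 0, 0, 0, 0, 0, 0],
    [0, 1, 0, 0, 0, 0, 0, 0],
    [0, 0, 1, 0, 0, 0, 0, 0],
    [0, 0, 0, 0, 1, 0, 0, 0],
    [0, 0, 0, 1, 0, 0, 0, 0],
    [0, 0, 0, 0, 0, 1, 0, 0],
    [0, 0, 0, 0, 0, 0, 1, 0],
    [0, 0, 0, 0, 0, 0, 0, 1]])" "j < dim_col (mat_of_rows_list 8 [[1, 0, 0, 0, 0, 0, 0, 0],
    [0, 1, 0, 0, 0, 0, 0, 0],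
    [0, 0, 1, 0, 0, 0, 0, 0],
    [0, 0, 0, 0, 1, 0, 0, 0],
    [0, 0, 0, 1, 0, 0, 0, 0],
    [0, 0, 0, 0, 0, 1, 0, 0],
    [0, 0, 0, 0, 0, 0, 1, 0],
    [0, 0, 0, 0, 0, 0, 0, 1]])"
  then have "i < 8" "j < 8" by (simp_all add: eval_nat_numeral)
  then show "tmat 8 4 5 $$ (i,j) = mat_of_rows_list 8 [[1, 0, 0, 0, 0, 0, 0, 0],
    [0, 1, 0, 0, 0, 0, 0, 0],
    [0, 0, 1, 0, 0, 0, 0, 0],
    [0, 0, 0, 0, 1, 0, 0, 0],
    [0, 0, 0, 1, 0, 0, 0, 0],
    [0, 0, 0, 0, 0, 1, 0, 0],
    [0, 0, 0, 0, 0, 0, 1, 0],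
    [0, 0, 0, 0, 0, 0, 0, 1]] $$ (i,j)"
    unfolding less8 by (elim disjE) (simp_all add: tmat_def mat_of_rows_list_def)
qed (simp_all add: tmat_def mat_of_rows_list_def)

lemma tmat8_56: "tmat 8 5 6 = mat_of_rows_list 8 [[1, 0, 0, 0, 0, 0, 0, 0],
    [0, 1, 0, 0, 0, 0, 0, 0],
    [0, 0, 1, 0, 0, 0, 0, 0],
    [0, 0, 0, 1, 0, 0, 0, 0],
    [0, 0, 0, 0, 0, 1, 0, 0],
    [0, 0, 0, 0, 1, 0, 0, 0],
    [0, 0, 0, 0, 0, 0, 1, 0],
    [0, 0, 0, 0, 0, 0, 0, 1]]"
proof (rule eq_matI)
  fix i j assume "i < dim_row (mat_of_rows_list 8 [[1, 0, 0, 0, 0, 0, 0, 0],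
    [0, 1, 0, 0, 0, 0, 0, 0],
    [0, 0, 1, 0, 0, 0, 0, 0],
    [0, 0, 0, 1, 0, 0, 0, 0],
    [0, 0, 0, 0, 0, 1, 0, 0],
    [0, 0, 0, 0, 1, 0, 0, 0],
    [0, 0, 0, 0, 0, 0, 1, 0],
    [0, 0, 0, 0, 0, 0, 0, 1]])" "j < dim_col (mat_of_rows_list 8 [[1, 0, 0, 0, 0, 0, 0, 0],
    [0, 1, 0, 0, 0, 0, 0, 0],
    [0, 0, 1, 0, 0, 0, 0, 0],
    [0, 0, 0, 1, 0, 0, 0, 0],
    [0, 0, 0, 0, 0, 1, 0, 0],
    [0, 0, 0, 0, 1, 0, 0, 0],
    [0, 0, 0, 0, 0, 0, 1, 0],
    [0, 0, 0, 0, 0, 0, 0, 1]])"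
  then have "i < 8" "j < 8" by (simp_all add: eval_nat_numeral)
  then show "tmat 8 5 6 $$ (i,j) = mat_of_rows_list 8 [[1, 0, 0, 0, 0, 0, 0, 0],
    [0, 1, 0, 0, 0, 0, 0, 0],
    [0, 0, 1, 0, 0, 0, 0, 0],
    [0, 0, 0, 1, 0, 0, 0, 0],
    [0, 0, 0, 0, 0, 1, 0, 0],
    [0, 0, 0, 0, 1, 0, 0, 0],
    [0, 0, 0, 0, 0, 0, 1, 0],
    [0, 0, 0, 0, 0, 0, 0, 1]] $$ (i,j)"
    unfolding less8 by (elim disjE) (simp_all add: tmat_def mat_of_rows_list_def)
qed (simp_all add: tmat_def mat_of_rows_list_def)

lemma tmat8_67: "tmat 8 6 7 = mat_of_rows_list 8 [[1, 0, 0, 0, 0, 0, 0, 0],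
    [0, 1, 0, 0, 0, 0, 0, 0],
    [0, 0, 1, 0, 0, 0, 0, 0],
    [0, 0, 0, 1, 0, 0, 0, 0],
    [0, 0, 0, 0, 1, 0, 0, 0],
    [0, 0, 0, 0, 0, 0, 1, 0],
    [0, 0, 0, 0, 0, 1, 0, 0],
    [0, 0, 0, 0, 0, 0, 0, 1]]"
proof (rule eq_matI)
  fix i j assume "i < dim_row (mat_of_rows_list 8 [[1, 0, 0, 0, 0, 0, 0, 0],
    [0, 1, 0, 0, 0, 0, 0, 0],
    [0, 0, 1, 0, 0, 0, 0, 0],
    [0, 0, 0, 1, 0, 0, 0, 0],
    [0, 0, 0, 0, 1, 0, 0, 0],
    [0, 0, 0, 0, 0, 0, 1, 0],
    [0, 0, 0, 0, 0, 1, 0, 0],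
    [0, 0, 0, 0, 0, 0, 0, 1]])" "j < dim_col (mat_of_rows_list 8 [[1, 0, 0, 0, 0, 0, 0, 0],
    [0, 1, 0, 0, 0, 0, 0, 0],
    [0, 0, 1, 0, 0, 0, 0, 0],
    [0, 0, 0, 1, 0, 0, 0, 0],
    [0, 0, 0, 0, 1, 0, 0, 0],
    [0, 0, 0, 0, 0, 0, 1, 0],
    [0, 0, 0, 0, 0, 1, 0, 0],
    [0, 0, 0, 0, 0, 0, 0, 1]])"
  then have "i < 8" "j < 8" by (simp_all add: eval_nat_numeral)
  then show "tmat 8 6 7 $$ (i,j) = mat_of_rows_list 8 [[1, 0, 0, 0, 0, 0, 0, 0],
    [0, 1, 0, 0, 0, 0, 0, 0],
    [0, 0, 1, 0, 0, 0, 0, 0],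
    [0, 0, 0, 1, 0, 0, 0, 0],
    [0, 0, 0, 0, 1, 0, 0, 0],
    [0, 0, 0, 0, 0, 0, 1, 0],
    [0, 0, 0, 0, 0, 1, 0, 0],
    [0, 0, 0, 0, 0, 0, 0, 1]] $$ (i,j)"
    unfolding less8 by (elim disjE) (simp_all add: tmat_def mat_of_rows_list_def)
qed (simp_all add: tmat_def mat_of_rows_list_def)

lemma tmat8_78: "tmat 8 7 8 = mat_of_rows_list 8 [[1, 0, 0, 0, 0, 0, 0, 0],
    [0, 1, 0, 0, 0, 0, 0, 0],
    [0, 0, 1, 0, 0, 0, 0, 0],
    [0, 0, 0, 1, 0, 0, 0, 0],
    [0, 0, 0, 0, 1, 0, 0, 0],
    [0, 0, 0, 0, 0, 1, 0, 0],
    [0, 0, 0, 0, 0, 0, 0, 1],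
    [0, 0, 0, 0, 0, 0, 1, 0]]"
proof (rule eq_matI)
  fix i j assume "i < dim_row (mat_of_rows_list 8 [[1, 0, 0, 0, 0, 0, 0, 0],
    [0, 1, 0, 0, 0, 0, 0, 0],
    [0, 0, 1, 0, 0, 0, 0, 0],
    [0, 0, 0, 1, 0, 0, 0, 0],
    [0, 0, 0, 0, 1, 0, 0, 0],
    [0, 0, 0, 0, 0, 1, 0, 0],
    [0, 0, 0, 0, 0, 0, 0, 1],
    [0, 0, 0, 0, 0, 0, 1, 0]])" "j < dim_col (mat_of_rows_list 8 [[1, 0, 0, 0, 0, 0, 0, 0],
    [0, 1, 0, 0, 0, 0, 0, 0],
    [0, 0, 1, 0, 0, 0, 0, 0],
    [0, 0, 0, 1, 0, 0, 0, 0],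
    [0, 0, 0, 0, 1, 0, 0, 0],
    [0, 0, 0, 0, 0, 1, 0, 0],
    [0, 0, 0, 0, 0, 0, 0, 1],
    [0, 0, 0, 0, 0, 0, 1, 0]])"
  then have "i < 8" "j < 8" by (simp_all add: eval_nat_numeral)
  then show "tmat 8 7 8 $$ (i,j) = mat_of_rows_list 8 [[1, 0, 0, 0, 0, 0, 0, 0],
    [0, 1, 0, 0, 0, 0, 0, 0],
    [0, 0, 1, 0, 0, 0, 0, 0],
    [0, 0, 0, 1, 0, 0, 0, 0],
    [0, 0, 0, 0, 1, 0, 0, 0],
    [0, 0, 0, 0, 0, 1, 0, 0],
    [0, 0, 0, 0, 0, 0, 0, 1],
    [0, 0, 0, 0, 0, 0, 1, 0]] $$ (i,j)"
    unfolding less8 by (elim disjE) (simp_all add: tmat_def mat_of_rows_list_def)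
qed (simp_all add: tmat_def mat_of_rows_list_def)


definition I8rows :: "complex list list" where "I8rows = [[1, 0, 0, 0, 0, 0, 0, 0],
    [0, 1, 0, 0, 0, 0, 0, 0],
    [0, 0, 1, 0, 0, 0, 0, 0],
    [0, 0, 0, 1, 0, 0, 0, 0],
    [0, 0, 0, 0, 1, 0, 0, 0],
    [0, 0, 0, 0, 0, 1, 0, 0],
    [0, 0, 0, 0, 0, 0, 1, 0],
    [0, 0, 0, 0, 0, 0, 0, 1]]"

lemma one8: "1\<^sub>m 8 = mat_of_rows_list 8 I8rows"
proof (rule eq_matI)
  fix i j assume "i < dim_row (mat_of_rows_list 8 I8rows)" "j < dim_col (mat_of_rows_list 8 I8rows)"
  then have "i < 8" "j < 8" by (simp_all add: eval_nat_numeral I8rows_def)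
  then show "1\<^sub>m 8 $$ (i,j) = mat_of_rows_list 8 I8rows $$ (i,j)"
    unfolding less8 by (elim disjE) (simp_all add: I8rows_def mat_of_rows_list_def)
qed (simp_all add: I8rows_def)

definition I7rows :: "complex list list" where "I7rows = [[1, 0, 0, 0, 0, 0, 0],
    [0, 1, 0, 0, 0, 0, 0],
    [0, 0, 1, 0, 0, 0, 0],
    [0, 0, 0, 1, 0, 0, 0],
    [0, 0, 0, 0, 1, 0, 0],
    [0, 0, 0, 0, 0, 1, 0],
    [0, 0, 0, 0, 0, 0, 1]]"

lemma one7: "1\<^sub>m 7 = mat_of_rows_list 7 I7rows"
proof (rule eq_matI)
  fix i j assume "i < dim_row (mat_of_rows_list 7 I7rows)" "j < dim_col (mat_of_rows_list 7 I7rows)"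
  then have "i < 7" "j < 7" by (simp_all add: eval_nat_numeral I7rows_def)
  then show "1\<^sub>m 7 $$ (i,j) = mat_of_rows_list 7 I7rows $$ (i,j)"
    unfolding less7 by (elim disjE) (simp_all add: I7rows_def mat_of_rows_list_def)
qed (simp_all add: I7rows_def)

primrec mat8 :: "L \<Rightarrow> complex mat" where
  "mat8 T23 = tmat 8 2 3"
| "mat8 T34 = tmat 8 3 4"
| "mat8 T45 = tmat 8 4 5"
| "mat8 T56 = tmat 8 5 6"
| "mat8 T67 = tmat 8 6 7"
| "mat8 T78 = tmat 8 7 8"
| "mat8 LX = Xm"
| "mat8 LS = s1"

lemma s1_rows: "s1 = mat_of_rows_list 8 (rows8 LS)"
  unfolding s1_def Ym_def tmat8_23 by (simp add: mrl_mult_8)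

lemma mat8_rows: "mat8 l = mat_of_rows_list 8 (rows8 l)"
  by (cases l) (simp_all only: mat8.simps tmat8_23 tmat8_34 tmat8_45 tmat8_56 tmat8_67 tmat8_78 Xm_def s1_rows rows8.simps)

lemmas comp8 = tmat8_23 tmat8_34 tmat8_45 tmat8_56 tmat8_67 tmat8_78 Xm_def s1_rows rows8.simps one8 I8rows_def

lemma rows8_ok: "length (rows8 l) = 8" "\<forall>r\<in>set (rows8 l). length r = 8"
  by (cases l; simp)+

lemma mat8_carrier[simp]: "mat8 l \<in> carrier_mat 8 8"
  unfolding mat8_rows using mrl_carrier[of 8 "rows8 l"] rows8_ok(1)[of l] by simp

lemma mat8_sq: "mat8 l * mat8 l = 1\<^sub>m 8"
  unfolding mat8_rows one8 by (cases l) (simp_all add: mrl_mult_8 I8rows_def)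

lemma vecp_len: "length (vecp p) = 8"
  by (cases p) simp_all

definition pv :: "P \<Rightarrow> complex vec" where "pv p = vec_of_list (vecp p)"

lemma pv_carrier[simp]: "pv p \<in> carrier_vec 8"
  unfolding pv_def carrier_vec_def using vecp_len[of p] by simp

lemma pv_index: "pv p $ k = vecp p ! k" by (simp add: pv_def vec_of_list_index)

lemma lvm_act: "lvm [0,0,0,0,0,0,0,0] (vecp p) (rows8 l) = vecp (act l p)"
  by (cases l; cases p) (simp_all add: act_def)

lemma letter_act: "rvm (pv p) (mat8 l) = pv (act l p)"
  unfolding pv_def mat8_rows
  by (subst rvm_mrl[where z="[0,0,0,0,0,0,0,0]"]) (simp_all add: vecp_len rows8_ok lvm_act less8)

abbreviation W8 :: "L list \<Rightarrow> complex mat" where "W8 \<equiv> wprod 8 mat8"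

lemma W8_carrier[simp]: "W8 w \<in> carrier_mat 8 8"
  by (rule wprod_carrier) simp

lemma W8_append: "W8 (u @ v) = W8 u * W8 v"
  by (rule wprod_append) simp

lemma W8_single: "W8 [l] = mat8 l"
  using right_mult_one_mat[OF mat8_carrier[of l]] by simp

lemma W8_cong_app: "W8 u = W8 u' \<Longrightarrow> W8 (u @ v) = W8 (u' @ v)"
  by (simp add: W8_append)

lemma W8_cong_pre: "W8 u = W8 u' \<Longrightarrow> W8 (v @ u) = W8 (v @ u')"
  by (simp add: W8_append)

lemma W8_rev: "W8 (rev w) * W8 w = 1\<^sub>m 8"
  by (rule wprod_rev[where A=UNIV]) (simp_all add: mat8_sq)

lemma W8_rev_cancel: "W8 (rev g @ g @ v) = W8 v"
proof -
  have "W8 (rev g @ g @ v) = W8 ((rev g @ g) @ v)" by simp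
  also have "\<dots> = (W8 (rev g) * W8 g) * W8 v" by (simp only: W8_append)
  also have "\<dots> = W8 v" using W8_rev[of g] left_mult_one_mat[OF W8_carrier[of v]] by simp
  finally show ?thesis .
qed

definition wperm :: "L list \<Rightarrow> P \<Rightarrow> P" where "wperm w p = foldl (\<lambda>q l. act l q) p w"

lemma wperm_Nil[simp]: "wperm [] p = p" by (simp add: wperm_def)
lemma wperm_Cons[simp]: "wperm (l # w) p = wperm w (act l p)" by (simp add: wperm_def)
lemma wperm_append[simp]: "wperm (u @ v) p = wperm v (wperm u p)" by (simp add: wperm_def)

lemma word_act: "rvm (pv p) (W8 w) = pv (wperm w p)"
proof (induction w arbitrary: p)
  case Nil then show ?case by (simp add: rvm_one)
next
  case (Cons l w)
  have "rvm (pv p) (W8 (l # w)) = rvm (rvm (pv p) (mat8 l)) (W8 w)"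
    by (simp add: rvm_mult[of "mat8 l" 8 "W8 w" "pv p"])
  then show ?case using Cons by (simp add: letter_act)
qed

lemma act_invol[simp]: "act l (act l p) = p"
  by (cases l; cases p) (simp_all add: act_def)

lemma wperm_rev[simp]: "wperm (rev w) (wperm w p) = p"
  by (induction w arbitrary: p) simp_all

section \<open>Faithfulness\<close>

primrec Tw :: "P \<Rightarrow> L list" where
  "Tw P0 = []"
| "Tw P1 = [T23]"
| "Tw P2 = [LS]"
| "Tw P3 = [T23, T34]"
| "Tw P4 = [T23, LX]"
| "Tw P5 = [LS, T34]"
| "Tw P6 = [T23, T34, T45]"
| "Tw P7 = [T23, T34, LX]"
| "Tw P8 = [T23, T34, LS]"
| "Tw P9 = [T23, LX, T56]"
| "Tw P10 = [LS, T34, T45]"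
| "Tw P11 = [T23, T34, T45, T56]"
| "Tw P12 = [T23, T34, T45, LX]"
| "Tw P13 = [T23, T34, T45, LS]"
| "Tw P14 = [T23, T34, LX, T23]"
| "Tw P15 = [T23, T34, LX, T56]"
| "Tw P16 = [T23, T34, LX, LS]"
| "Tw P17 = [T23, LX, T56, T45]"
| "Tw P18 = [T23, LX, T56, T67]"
| "Tw P19 = [LS, T34, T45, T56]"
| "Tw P20 = [T23, T34, T45, T56, T67]"
| "Tw P21 = [T23, T34, T45, T56, LS]"
| "Tw P22 = [T23, T34, T45, LX, T23]"
| "Tw P23 = [T23, T34, T45, LX, LS]"
| "Tw P24 = [T23, T34, T45, LS, T34]"
| "Tw P25 = [T23, T34, LX, T23, T56]"
| "Tw P26 = [T23, T34, LX, T56, T67]"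
| "Tw P27 = [T23, T34, LX, T56, LS]"
| "Tw P28 = [T23, LX, T56, T45, T67]"
| "Tw P29 = [T23, LX, T56, T67, T78]"
| "Tw P30 = [LS, T34, T45, T56, T67]"
| "Tw P31 = [LS, T34, T45, T56, LX]"
| "Tw P32 = [T23, T34, T45, T56, T67, T78]"
| "Tw P33 = [T23, T34, T45, T56, T67, LS]"
| "Tw P34 = [T23, T34, T45, T56, LS, T34]"
| "Tw P35 = [T23, T34, T45, LX, T23, T34]"
| "Tw P36 = [T23, T34, T45, LX, LS, T34]"
| "Tw P37 = [T23, T34, LX, T23, T56, T67]"
| "Tw P38 = [T23, T34, LX, T23, T56, LX]"
| "Tw P39 = [T23, T34, LX, T56, T67, T78]"
| "Tw P40 = [T23, T34, LX, T56, T67, LS]"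
| "Tw P41 = [T23, LX, T56, T45, T67, T56]"
| "Tw P42 = [T23, LX, T56, T45, T67, T78]"
| "Tw P43 = [LS, T34, T45, T56, T67, T78]"
| "Tw P44 = [LS, T34, T45, T56, T67, LX]"
| "Tw P45 = [T23, T34, T45, T56, T67, T78, LS]"
| "Tw P46 = [T23, T34, T45, T56, T67, LS, T34]"
| "Tw P47 = [T23, T34, T45, T56, LS, T34, T45]"
| "Tw P48 = [T23, T34, T45, LX, T23, T34, LS]"
| "Tw P49 = [T23, T34, LX, T23, T56, T67, T78]"
| "Tw P50 = [T23, T34, LX, T23, T56, T67, LX]"
| "Tw P51 = [T23, T34, LX, T56, T67, T78, LS]"
| "Tw P52 = [T23, T34, T45, T56, T67, T78, LS, T34]"
| "Tw P53 = [T23, T34, T45, T56, T67, LS, T34, T45]"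
| "Tw P54 = [T23, T34, LX, T23, T56, T67, T78, LX]"
| "Tw P55 = [T23, T34, LX, T23, T56, T67, LX, T56]"

primrec Sg :: "P \<Rightarrow> L \<Rightarrow> L list" where
  "Sg P0 = (\<lambda>l. case l of T23 \<Rightarrow> [] | T34 \<Rightarrow> [T34] | T45 \<Rightarrow> [T45] | T56 \<Rightarrow> [T56] | T67 \<Rightarrow> [T67] | T78 \<Rightarrow> [T78] | LX \<Rightarrow> [LX] | LS \<Rightarrow> [])"
| "Sg P1 = (\<lambda>l. case l of T23 \<Rightarrow> [] | T34 \<Rightarrow> [] | T45 \<Rightarrow> [T45] | T56 \<Rightarrow> [T56] | T67 \<Rightarrow> [T67] | T78 \<Rightarrow> [T78] | LX \<Rightarrow> [] | LS \<Rightarrow> [LX, T56, T45, T34, T67, T56, T45, T78, T67, T56, LX, T56, T45, T34, T67, T56, T45, T78, T67, T56, LX])"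
| "Sg P2 = (\<lambda>l. case l of T23 \<Rightarrow> [LX, T56, T45, T34, T67, T56, T45, T78, T67, T56, LX, T56, T45, T34, T67, T56, T45, T78, T67, T56, LX] | T34 \<Rightarrow> [] | T45 \<Rightarrow> [T45] | T56 \<Rightarrow> [T56] | T67 \<Rightarrow> [T67] | T78 \<Rightarrow> [T78] | LX \<Rightarrow> [LX] | LS \<Rightarrow> [])"
| "Sg P3 = (\<lambda>l. case l of T23 \<Rightarrow> [T34] | T34 \<Rightarrow> [] | T45 \<Rightarrow> [] | T56 \<Rightarrow> [T56] | T67 \<Rightarrow> [T67] | T78 \<Rightarrow> [T78] | LX \<Rightarrow> [] | LS \<Rightarrow> [])"
| "Sg P4 = (\<lambda>l. case l of T23 \<Rightarrow> [LX] | T34 \<Rightarrow> [] | T45 \<Rightarrow> [T45] | T56 \<Rightarrow> [] | T67 \<Rightarrow> [T67] | T78 \<Rightarrow> [T78] | LX \<Rightarrow> [] | LS \<Rightarrow> [LX, T56, T45, T34, T67, T56, T45, T78, T67, T56, LX, T56, T45, T34, T67, T56, T45, T78, T67, T56, LX])"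
| "Sg P5 = (\<lambda>l. case l of T23 \<Rightarrow> [T34, LX, T56, T45, T34, T67, T56, T45, T78, T67, T56, LX, T56, T45, T34, T67, T56, T45, T78, T67, T56, LX] | T34 \<Rightarrow> [] | T45 \<Rightarrow> [] | T56 \<Rightarrow> [T56] | T67 \<Rightarrow> [T67] | T78 \<Rightarrow> [T78] | LX \<Rightarrow> [LX] | LS \<Rightarrow> [T34])"
| "Sg P6 = (\<lambda>l. case l of T23 \<Rightarrow> [T34] | T34 \<Rightarrow> [T45] | T45 \<Rightarrow> [] | T56 \<Rightarrow> [] | T67 \<Rightarrow> [T67] | T78 \<Rightarrow> [T78] | LX \<Rightarrow> [] | LS \<Rightarrow> [])"
| "Sg P7 = (\<lambda>l. case l of T23 \<Rightarrow> [] | T34 \<Rightarrow> [] | T45 \<Rightarrow> [] | T56 \<Rightarrow> [] | T67 \<Rightarrow> [T67] | T78 \<Rightarrow> [T78] | LX \<Rightarrow> [] | LS \<Rightarrow> [])"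
| "Sg P8 = (\<lambda>l. case l of T23 \<Rightarrow> [T34, LX, T56, T45, T34, T67, T56, T45, T78, T67, T56, LX, T56, T45, T34, T67, T56, T45, T78, T67, T56, LX] | T34 \<Rightarrow> [LX, T56, T45, T34, T67, T56, T45, T78, T67, T56, LX, T56, T45, T34, T67, T56, T45, T78, T67, T56, LX] | T45 \<Rightarrow> [] | T56 \<Rightarrow> [T56] | T67 \<Rightarrow> [T67] | T78 \<Rightarrow> [T78] | LX \<Rightarrow> [] | LS \<Rightarrow> [])"
| "Sg P9 = (\<lambda>l. case l of T23 \<Rightarrow> [LX] | T34 \<Rightarrow> [] | T45 \<Rightarrow> [] | T56 \<Rightarrow> [] | T67 \<Rightarrow> [] | T78 \<Rightarrow> [T78] | LX \<Rightarrow> [T56] | LS \<Rightarrow> [LX, T56, T45, T34, T67, T56, T45, T78, T67, T56, LX, T56, T45, T34, T67, T56, T45, T78, T67, T56, LX])"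
| "Sg P10 = (\<lambda>l. case l of T23 \<Rightarrow> [T34, LX, T56, T45, T34, T67, T56, T45, T78, T67, T56, LX, T56, T45, T34, T67, T56, T45, T78, T67, T56, LX] | T34 \<Rightarrow> [T45] | T45 \<Rightarrow> [] | T56 \<Rightarrow> [] | T67 \<Rightarrow> [T67] | T78 \<Rightarrow> [T78] | LX \<Rightarrow> [LX] | LS \<Rightarrow> [T34])"
| "Sg P11 = (\<lambda>l. case l of T23 \<Rightarrow> [T34] | T34 \<Rightarrow> [T45] | T45 \<Rightarrow> [T56] | T56 \<Rightarrow> [] | T67 \<Rightarrow> [] | T78 \<Rightarrow> [T78] | LX \<Rightarrow> [T34, T45, T56, LX, T56, T45, T34] | LS \<Rightarrow> [])"
| "Sg P12 = (\<lambda>l. case l of T23 \<Rightarrow> [] | T34 \<Rightarrow> [T45] | T45 \<Rightarrow> [] | T56 \<Rightarrow> [T34, T45, T56, LX, T56, T45, T34] | T67 \<Rightarrow> [T67] | T78 \<Rightarrow> [T78] | LX \<Rightarrow> [] | LS \<Rightarrow> [])"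
| "Sg P13 = (\<lambda>l. case l of T23 \<Rightarrow> [T34, LX, T56, T45, T34, T67, T56, T45, T78, T67, T56, LX, T56, T45, T34, T67, T56, T45, T78, T67, T56, LX] | T34 \<Rightarrow> [] | T45 \<Rightarrow> [] | T56 \<Rightarrow> [] | T67 \<Rightarrow> [T67] | T78 \<Rightarrow> [T78] | LX \<Rightarrow> [] | LS \<Rightarrow> [])"
| "Sg P14 = (\<lambda>l. case l of T23 \<Rightarrow> [] | T34 \<Rightarrow> [LX] | T45 \<Rightarrow> [] | T56 \<Rightarrow> [] | T67 \<Rightarrow> [T67] | T78 \<Rightarrow> [T78] | LX \<Rightarrow> [T34] | LS \<Rightarrow> [T56, T45, T34, T67, T56, T45, T78, T67, T56, LX, T56, T45, T34, T67, T56, T45, T78, T67, T56])"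
| "Sg P15 = (\<lambda>l. case l of T23 \<Rightarrow> [] | T34 \<Rightarrow> [] | T45 \<Rightarrow> [T34, T45, T56, LX, T56, T45, T34] | T56 \<Rightarrow> [] | T67 \<Rightarrow> [] | T78 \<Rightarrow> [T78] | LX \<Rightarrow> [T56] | LS \<Rightarrow> [])"
| "Sg P16 = (\<lambda>l. case l of T23 \<Rightarrow> [T56, T45, T34, T67, T56, T45, T78, T67, T56, LX, T56, T45, T34, T67, T56, T45, T78, T67, T56] | T34 \<Rightarrow> [LX, T56, T45, T34, T67, T56, T45, T78, T67, T56, LX, T56, T45, T34, T67, T56, T45, T78, T67, T56, LX] | T45 \<Rightarrow> [] | T56 \<Rightarrow> [] | T67 \<Rightarrow> [T67] | T78 \<Rightarrow> [T78] | LX \<Rightarrow> [] | LS \<Rightarrow> [])"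
| "Sg P17 = (\<lambda>l. case l of T23 \<Rightarrow> [LX] | T34 \<Rightarrow> [T34, T45, T56, LX, T56, T45, T34] | T45 \<Rightarrow> [] | T56 \<Rightarrow> [T45] | T67 \<Rightarrow> [] | T78 \<Rightarrow> [T78] | LX \<Rightarrow> [T56] | LS \<Rightarrow> [LX, T56, T45, T34, T67, T56, T45, T78, T67, T56, LX, T56, T45, T34, T67, T56, T45, T78, T67, T56, LX])"
| "Sg P18 = (\<lambda>l. case l of T23 \<Rightarrow> [LX] | T34 \<Rightarrow> [] | T45 \<Rightarrow> [] | T56 \<Rightarrow> [T67] | T67 \<Rightarrow> [] | T78 \<Rightarrow> [] | LX \<Rightarrow> [T56] | LS \<Rightarrow> [LX, T56, T45, T34, T67, T56, T45, T78, T67, T56, LX, T56, T45, T34, T67, T56, T45, T78, T67, T56, LX])"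
| "Sg P19 = (\<lambda>l. case l of T23 \<Rightarrow> [T34, LX, T56, T45, T34, T67, T56, T45, T78, T67, T56, LX, T56, T45, T34, T67, T56, T45, T78, T67, T56, LX] | T34 \<Rightarrow> [T45] | T45 \<Rightarrow> [T56] | T56 \<Rightarrow> [] | T67 \<Rightarrow> [] | T78 \<Rightarrow> [T78] | LX \<Rightarrow> [] | LS \<Rightarrow> [T34])"
| "Sg P20 = (\<lambda>l. case l of T23 \<Rightarrow> [T34] | T34 \<Rightarrow> [T45] | T45 \<Rightarrow> [T56] | T56 \<Rightarrow> [T67] | T67 \<Rightarrow> [] | T78 \<Rightarrow> [] | LX \<Rightarrow> [T34, T45, T56, LX, T56, T45, T34] | LS \<Rightarrow> [])"
| "Sg P21 = (\<lambda>l. case l of T23 \<Rightarrow> [T34, LX, T56, T45, T34, T67, T56, T45, T78, T67, T56, LX, T56, T45, T34, T67, T56, T45, T78, T67, T56, LX] | T34 \<Rightarrow> [] | T45 \<Rightarrow> [T56] | T56 \<Rightarrow> [] | T67 \<Rightarrow> [] | T78 \<Rightarrow> [T78] | LX \<Rightarrow> [T34, T45, T56, LX, T56, T45, T34] | LS \<Rightarrow> [])"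
| "Sg P22 = (\<lambda>l. case l of T23 \<Rightarrow> [] | T34 \<Rightarrow> [] | T45 \<Rightarrow> [] | T56 \<Rightarrow> [T34, T45, T56, LX, T56, T45, T34] | T67 \<Rightarrow> [T67] | T78 \<Rightarrow> [T78] | LX \<Rightarrow> [T34] | LS \<Rightarrow> [T56, T45, T34, T67, T56, T45, T78, T67, T56, LX, T56, T45, T34, T67, T56, T45, T78, T67, T56])"
| "Sg P23 = (\<lambda>l. case l of T23 \<Rightarrow> [T56, T45, T34, T67, T56, T45, T78, T67, T56, LX, T56, T45, T34, T67, T56, T45, T78, T67, T56] | T34 \<Rightarrow> [] | T45 \<Rightarrow> [] | T56 \<Rightarrow> [T34, T45, T56, LX, T56, T45, T34] | T67 \<Rightarrow> [T67] | T78 \<Rightarrow> [T78] | LX \<Rightarrow> [] | LS \<Rightarrow> [])"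
| "Sg P24 = (\<lambda>l. case l of T23 \<Rightarrow> [T34, T45, T34] | T34 \<Rightarrow> [] | T45 \<Rightarrow> [LX, T56, T45, T34, T67, T56, T45, T78, T67, T56, LX, T56, T45, T34, T67, T56, T45, T78, T67, T56, LX] | T56 \<Rightarrow> [] | T67 \<Rightarrow> [T67] | T78 \<Rightarrow> [T78] | LX \<Rightarrow> [] | LS \<Rightarrow> [T45])"
| "Sg P25 = (\<lambda>l. case l of T23 \<Rightarrow> [] | T34 \<Rightarrow> [LX] | T45 \<Rightarrow> [T34, T45, T56, LX, T56, T45, T34] | T56 \<Rightarrow> [] | T67 \<Rightarrow> [] | T78 \<Rightarrow> [T78] | LX \<Rightarrow> [] | LS \<Rightarrow> [T56, T45, T34, T67, T56, T45, T78, T67, T56, LX, T56, T45, T34, T67, T56, T45, T78, T67, T56])"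
| "Sg P26 = (\<lambda>l. case l of T23 \<Rightarrow> [] | T34 \<Rightarrow> [] | T45 \<Rightarrow> [T34, T45, T56, LX, T56, T45, T34] | T56 \<Rightarrow> [T67] | T67 \<Rightarrow> [] | T78 \<Rightarrow> [] | LX \<Rightarrow> [T56] | LS \<Rightarrow> [])"
| "Sg P27 = (\<lambda>l. case l of T23 \<Rightarrow> [T56, T45, T34, T67, T56, T45, T78, T67, T56, LX, T56, T45, T34, T67, T56, T45, T78, T67, T56] | T34 \<Rightarrow> [LX, T56, T45, T34, T67, T56, T45, T78, T67, T56, LX, T56, T45, T34, T67, T56, T45, T78, T67, T56, LX] | T45 \<Rightarrow> [T34, T45, T56, LX, T56, T45, T34] | T56 \<Rightarrow> [] | T67 \<Rightarrow> [] | T78 \<Rightarrow> [T78] | LX \<Rightarrow> [T56] | LS \<Rightarrow> [])"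
| "Sg P28 = (\<lambda>l. case l of T23 \<Rightarrow> [LX] | T34 \<Rightarrow> [T34, T45, T56, LX, T56, T45, T34] | T45 \<Rightarrow> [] | T56 \<Rightarrow> [] | T67 \<Rightarrow> [] | T78 \<Rightarrow> [] | LX \<Rightarrow> [T56] | LS \<Rightarrow> [LX, T56, T45, T34, T67, T56, T45, T78, T67, T56, LX, T56, T45, T34, T67, T56, T45, T78, T67, T56, LX])"
| "Sg P29 = (\<lambda>l. case l of T23 \<Rightarrow> [LX] | T34 \<Rightarrow> [] | T45 \<Rightarrow> [] | T56 \<Rightarrow> [T67] | T67 \<Rightarrow> [T78] | T78 \<Rightarrow> [] | LX \<Rightarrow> [T56] | LS \<Rightarrow> [LX, T56, T45, T34, T67, T56, T45, T78, T67, T56, LX, T56, T45, T34, T67, T56, T45, T78, T67, T56, LX])"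
| "Sg P30 = (\<lambda>l. case l of T23 \<Rightarrow> [T34, LX, T56, T45, T34, T67, T56, T45, T78, T67, T56, LX, T56, T45, T34, T67, T56, T45, T78, T67, T56, LX] | T34 \<Rightarrow> [T45] | T45 \<Rightarrow> [T56] | T56 \<Rightarrow> [T67] | T67 \<Rightarrow> [] | T78 \<Rightarrow> [] | LX \<Rightarrow> [] | LS \<Rightarrow> [T34])"
| "Sg P31 = (\<lambda>l. case l of T23 \<Rightarrow> [T34, T67, T56, T45, T78, T67, T56, LX, T56, T45, T34, T67, T56, T78, T67] | T34 \<Rightarrow> [T45] | T45 \<Rightarrow> [T56] | T56 \<Rightarrow> [LX] | T67 \<Rightarrow> [] | T78 \<Rightarrow> [T78] | LX \<Rightarrow> [] | LS \<Rightarrow> [T34])"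
| "Sg P32 = (\<lambda>l. case l of T23 \<Rightarrow> [T34] | T34 \<Rightarrow> [T45] | T45 \<Rightarrow> [T56] | T56 \<Rightarrow> [T67] | T67 \<Rightarrow> [T78] | T78 \<Rightarrow> [] | LX \<Rightarrow> [T34, T45, T56, LX, T56, T45, T34] | LS \<Rightarrow> [])"
| "Sg P33 = (\<lambda>l. case l of T23 \<Rightarrow> [T34, LX, T56, T45, T34, T67, T56, T45, T78, T67, T56, LX, T56, T45, T34, T67, T56, T45, T78, T67, T56, LX] | T34 \<Rightarrow> [] | T45 \<Rightarrow> [T56] | T56 \<Rightarrow> [T67] | T67 \<Rightarrow> [] | T78 \<Rightarrow> [] | LX \<Rightarrow> [T34, T45, T56, LX, T56, T45, T34] | LS \<Rightarrow> [])"
| "Sg P34 = (\<lambda>l. case l of T23 \<Rightarrow> [T34, T45, T34] | T34 \<Rightarrow> [] | T45 \<Rightarrow> [] | T56 \<Rightarrow> [] | T67 \<Rightarrow> [] | T78 \<Rightarrow> [T78] | LX \<Rightarrow> [T34, T45, T56, LX, T56, T45, T34] | LS \<Rightarrow> [T45])"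
| "Sg P35 = (\<lambda>l. case l of T23 \<Rightarrow> [T45] | T34 \<Rightarrow> [] | T45 \<Rightarrow> [LX] | T56 \<Rightarrow> [T34, T45, T56, LX, T56, T45, T34] | T67 \<Rightarrow> [T67] | T78 \<Rightarrow> [T78] | LX \<Rightarrow> [T34] | LS \<Rightarrow> [])"
| "Sg P36 = (\<lambda>l. case l of T23 \<Rightarrow> [T45, T56, T45, T34, T67, T56, T45, T78, T67, T56, LX, T56, T45, T34, T67, T56, T45, T78, T67, T56] | T34 \<Rightarrow> [] | T45 \<Rightarrow> [LX, T56, T45, T34, T67, T56, T45, T78, T67, T56, LX, T56, T45, T34, T67, T56, T45, T78, T67, T56, LX] | T56 \<Rightarrow> [T34, T45, T56, LX, T56, T45, T34] | T67 \<Rightarrow> [T67] | T78 \<Rightarrow> [T78] | LX \<Rightarrow> [] | LS \<Rightarrow> [T45])"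
| "Sg P37 = (\<lambda>l. case l of T23 \<Rightarrow> [] | T34 \<Rightarrow> [LX] | T45 \<Rightarrow> [T34, T45, T56, LX, T56, T45, T34] | T56 \<Rightarrow> [T67] | T67 \<Rightarrow> [] | T78 \<Rightarrow> [] | LX \<Rightarrow> [] | LS \<Rightarrow> [T56, T45, T34, T67, T56, T45, T78, T67, T56, LX, T56, T45, T34, T67, T56, T45, T78, T67, T56])"
| "Sg P38 = (\<lambda>l. case l of T23 \<Rightarrow> [T56] | T34 \<Rightarrow> [LX] | T45 \<Rightarrow> [T34, T45, T56, LX, T56, T45, T34] | T56 \<Rightarrow> [T34] | T67 \<Rightarrow> [] | T78 \<Rightarrow> [T78] | LX \<Rightarrow> [] | LS \<Rightarrow> [T56, T45, T34, T67, T56, T45, T78, T67, T56, LX, T56, T45, T34, T67, T56, T45, T78, T67, T56])"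
| "Sg P39 = (\<lambda>l. case l of T23 \<Rightarrow> [] | T34 \<Rightarrow> [] | T45 \<Rightarrow> [T34, T45, T56, LX, T56, T45, T34] | T56 \<Rightarrow> [T67] | T67 \<Rightarrow> [T78] | T78 \<Rightarrow> [] | LX \<Rightarrow> [T56] | LS \<Rightarrow> [])"
| "Sg P40 = (\<lambda>l. case l of T23 \<Rightarrow> [T56, T45, T34, T67, T56, T45, T78, T67, T56, LX, T56, T45, T34, T67, T56, T45, T78, T67, T56] | T34 \<Rightarrow> [LX, T56, T45, T34, T67, T56, T45, T78, T67, T56, LX, T56, T45, T34, T67, T56, T45, T78, T67, T56, LX] | T45 \<Rightarrow> [T34, T45, T56, LX, T56, T45, T34] | T56 \<Rightarrow> [T67] | T67 \<Rightarrow> [] | T78 \<Rightarrow> [] | LX \<Rightarrow> [T56] | LS \<Rightarrow> [])"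
| "Sg P41 = (\<lambda>l. case l of T23 \<Rightarrow> [LX] | T34 \<Rightarrow> [T34, T45, T56, LX, T56, T45, T34] | T45 \<Rightarrow> [T67] | T56 \<Rightarrow> [] | T67 \<Rightarrow> [T45] | T78 \<Rightarrow> [LX, T56, T45, T67, T56, T78, T67, LX, T56, T45, T34] | LX \<Rightarrow> [LX, T56, T45, T67, T56, T78, T67, LX, T56, T45, T34] | LS \<Rightarrow> [LX, T56, T45, T34, T67, T56, T45, T78, T67, T56, LX, T56, T45, T34, T67, T56, T45, T78, T67, T56, LX])"
| "Sg P42 = (\<lambda>l. case l of T23 \<Rightarrow> [LX] | T34 \<Rightarrow> [T34, T45, T56, LX, T56, T45, T34] | T45 \<Rightarrow> [] | T56 \<Rightarrow> [LX, T56, T45, T67, T56, T78, T67, LX, T56, T45, T34] | T67 \<Rightarrow> [T78] | T78 \<Rightarrow> [] | LX \<Rightarrow> [T56] | LS \<Rightarrow> [LX, T56, T45, T34, T67, T56, T45, T78, T67, T56, LX, T56, T45, T34, T67, T56, T45, T78, T67, T56, LX])"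
| "Sg P43 = (\<lambda>l. case l of T23 \<Rightarrow> [T34, LX, T56, T45, T34, T67, T56, T45, T78, T67, T56, LX, T56, T45, T34, T67, T56, T45, T78, T67, T56, LX] | T34 \<Rightarrow> [T45] | T45 \<Rightarrow> [T56] | T56 \<Rightarrow> [T67] | T67 \<Rightarrow> [T78] | T78 \<Rightarrow> [] | LX \<Rightarrow> [T34, T45, T56, T67, T78, LX, T56, T45, T67, T56, LX] | LS \<Rightarrow> [T34])"
| "Sg P44 = (\<lambda>l. case l of T23 \<Rightarrow> [T34, T67, T56, T45, T78, T67, T56, LX, T56, T45, T34, T67, T56, T78, T67] | T34 \<Rightarrow> [T45] | T45 \<Rightarrow> [T56] | T56 \<Rightarrow> [T34, T45, T56, T67, T78, LX, T56, T45, T67, T56, LX] | T67 \<Rightarrow> [] | T78 \<Rightarrow> [T34, T45, T56, T67, T78, LX, T56, T45, T67, T56, LX] | LX \<Rightarrow> [] | LS \<Rightarrow> [T34])"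
| "Sg P45 = (\<lambda>l. case l of T23 \<Rightarrow> [T34, LX, T56, T45, T34, T67, T56, T45, T78, T67, T56, LX, T56, T45, T34, T67, T56, T45, T78, T67, T56, LX] | T34 \<Rightarrow> [] | T45 \<Rightarrow> [T56] | T56 \<Rightarrow> [T67] | T67 \<Rightarrow> [T78] | T78 \<Rightarrow> [] | LX \<Rightarrow> [T34, T45, T56, LX, T56, T45, T34] | LS \<Rightarrow> [])"
| "Sg P46 = (\<lambda>l. case l of T23 \<Rightarrow> [T34, T45, T34] | T34 \<Rightarrow> [] | T45 \<Rightarrow> [] | T56 \<Rightarrow> [T67] | T67 \<Rightarrow> [] | T78 \<Rightarrow> [] | LX \<Rightarrow> [T34, T45, T56, LX, T56, T45, T34] | LS \<Rightarrow> [T45])"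
| "Sg P47 = (\<lambda>l. case l of T23 \<Rightarrow> [T34, T45, T34] | T34 \<Rightarrow> [T56] | T45 \<Rightarrow> [] | T56 \<Rightarrow> [LX, T56, T45, T34, T67, T56, T45, T78, T67, T56, LX, T56, T45, T34, T67, T56, T45, T78, T67, T56, LX] | T67 \<Rightarrow> [] | T78 \<Rightarrow> [T78] | LX \<Rightarrow> [T34, T45, T56, LX, T56, T45, T34] | LS \<Rightarrow> [T45])"
| "Sg P48 = (\<lambda>l. case l of T23 \<Rightarrow> [T45, T56, T45, T34, T67, T56, T45, T78, T67, T56, LX, T56, T45, T34, T67, T56, T45, T78, T67, T56] | T34 \<Rightarrow> [T56, T45, T34, T67, T56, T45, T78, T67, T56, LX, T56, T45, T34, T67, T56, T45, T78, T67, T56] | T45 \<Rightarrow> [LX] | T56 \<Rightarrow> [T34, T45, T56, LX, T56, T45, T34] | T67 \<Rightarrow> [T67] | T78 \<Rightarrow> [T78] | LX \<Rightarrow> [T34] | LS \<Rightarrow> [])"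
| "Sg P49 = (\<lambda>l. case l of T23 \<Rightarrow> [] | T34 \<Rightarrow> [LX] | T45 \<Rightarrow> [T34, T45, T56, LX, T56, T45, T34] | T56 \<Rightarrow> [T67] | T67 \<Rightarrow> [T78] | T78 \<Rightarrow> [] | LX \<Rightarrow> [] | LS \<Rightarrow> [T56, T45, T34, T67, T56, T45, T78, T67, T56, LX, T56, T45, T34, T67, T56, T45, T78, T67, T56])"
| "Sg P50 = (\<lambda>l. case l of T23 \<Rightarrow> [T56] | T34 \<Rightarrow> [LX] | T45 \<Rightarrow> [T34, T45, T56, LX, T56, T45, T34] | T56 \<Rightarrow> [] | T67 \<Rightarrow> [] | T78 \<Rightarrow> [] | LX \<Rightarrow> [] | LS \<Rightarrow> [T56, T45, T34, T67, T56, T45, T78, T67, T56, LX, T56, T45, T34, T67, T56, T45, T78, T67, T56])"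
| "Sg P51 = (\<lambda>l. case l of T23 \<Rightarrow> [T56, T45, T34, T67, T56, T45, T78, T67, T56, LX, T56, T45, T34, T67, T56, T45, T78, T67, T56] | T34 \<Rightarrow> [LX, T56, T45, T34, T67, T56, T45, T78, T67, T56, LX, T56, T45, T34, T67, T56, T45, T78, T67, T56, LX] | T45 \<Rightarrow> [T34, T45, T56, LX, T56, T45, T34] | T56 \<Rightarrow> [T67] | T67 \<Rightarrow> [T78] | T78 \<Rightarrow> [] | LX \<Rightarrow> [T56] | LS \<Rightarrow> [])"
| "Sg P52 = (\<lambda>l. case l of T23 \<Rightarrow> [T34, T45, T34] | T34 \<Rightarrow> [] | T45 \<Rightarrow> [T45, T34, T56, T45, T34, T67, T78, T67, LX, T56, T45, T34, T67, T56, T45, LX, T56, T67, T78] | T56 \<Rightarrow> [T67] | T67 \<Rightarrow> [T78] | T78 \<Rightarrow> [] | LX \<Rightarrow> [T34, T45, T56, LX, T56, T45, T34] | LS \<Rightarrow> [T45])"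
| "Sg P53 = (\<lambda>l. case l of T23 \<Rightarrow> [T34, T45, T34] | T34 \<Rightarrow> [T56] | T45 \<Rightarrow> [] | T56 \<Rightarrow> [T45, T34, T56, T45, T34, T67, T78, T67, LX, T56, T45, T34, T67, T56, T45, LX, T56, T67, T78] | T67 \<Rightarrow> [] | T78 \<Rightarrow> [T45, T34, T56, T45, T34, T67, T78, T67, LX, T56, T45, T34, T67, T56, T45, LX, T56, T67, T78] | LX \<Rightarrow> [T34, T45, T56, LX, T56, T45, T34] | LS \<Rightarrow> [T45])"
| "Sg P54 = (\<lambda>l. case l of T23 \<Rightarrow> [T56] | T34 \<Rightarrow> [LX] | T45 \<Rightarrow> [T34, T45, T56, LX, T56, T45, T34] | T56 \<Rightarrow> [T34, T56, T78, T67, T56, T45, T34, LX, T56, T45, T34, T67, T56, T45, T78, T67, LX, T56, T45] | T67 \<Rightarrow> [T78] | T78 \<Rightarrow> [] | LX \<Rightarrow> [] | LS \<Rightarrow> [T56, T45, T34, T67, T56, T45, T78, T67, T56, LX, T56, T45, T34, T67, T56, T45, T78, T67, T56])"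
| "Sg P55 = (\<lambda>l. case l of T23 \<Rightarrow> [T56] | T34 \<Rightarrow> [LX] | T45 \<Rightarrow> [T34, T56, T78, T67, T56, T45, T34, LX, T56, T45, T34, T67, T56, T45, T78, T67, LX, T56, T45] | T56 \<Rightarrow> [] | T67 \<Rightarrow> [T34] | T78 \<Rightarrow> [T34, T56, T78, T67, T56, T45, T34, LX, T56, T45, T34, T67, T56, T45, T78, T67, LX, T56, T45] | LX \<Rightarrow> [T67] | LS \<Rightarrow> [T56, T45, T34, T67, T56, T45, T78, T67, T56, LX, T56, T45, T34, T67, T56, T45, T78, T67, T56])"

definition basL :: "P list" where "basL = [P0, P1, P2, P3, P4, P6, P9, P18]"

definition Qinvrows :: "complex list list" where "Qinvrows = [[1, 1, -1, 0, 0, 0, 0, 0],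
    [1, 0, 0, 0, 0, 0, 0, 0],
    [0, 1, 0, 0, 0, 0, 0, 0],
    [0, 0, 0, 1, 0, 0, 0, 0],
    [0, 0, 0, 0, 0, 1, 0, 0],
    [0, 0, 0, 0, 1, 1, -1, 0],
    [0, 0, 0, 0, 1, 1, 0, -1],
    [0, 0, -1, 1, 0, -1, 1, 1]]"

definition pdec :: "complex list \<Rightarrow> P" where "pdec v = (if v = vecp P0 then P0 else if v = vecp P1 then P1 else if v = vecp P2 then P2 else if v = vecp P3 then P3 else if v = vecp P4 then P4 else if v = vecp P5 then P5 else if v = vecp P6 then P6 else if v = vecp P7 then P7 else if v = vecp P8 then P8 else if v = vecp P9 then P9 else if v = vecp P10 then P10 else if v = vecp P11 then P11 else if v = vecp P12 then P12 else if v = vecp P13 then P13 else if v = vecp P14 then P14 else if v = vecp P15 then P15 else if v = vecp P16 then P16 else if v = vecp P17 then P17 else if v = vecp P18 then P18 else if v = vecp P19 then P19 else if v = vecp P20 then P20 else if v = vecp P21 then P21 else if v = vecp P22 then P22 else if v = vecp P23 then P23 else if v = vecp P24 then P24 else if v = vecp P25 then P25 else if v = vecp P26 then P26 else if v = vecp P27 then P27 else if v = vecp P28 then P28 else if v = vecp P29 then P29 else if v = vecp P30 then P30 else if v = vecp P31 then P31 else if v = vecp P32 then P32 else if v = vecp P33 then P33 else if v = vecp P34 then P34 else if v = vecp P35 then P35 else if v = vecp P36 then P36 else if v = vecp P37 then P37 else if v = vecp P38 then P38 else if v = vecp P39 then P39 else if v = vecp P40 then P40 else if v = vecp P41 then P41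 else if v = vecp P42 then P42 else if v = vecp P43 then P43 else if v = vecp P44 then P44 else if v = vecp P45 then P45 else if v = vecp P46 then P46 else if v = vecp P47 then P47 else if v = vecp P48 then P48 else if v = vecp P49 then P49 else if v = vecp P50 then P50 else if v = vecp P51 then P51 else if v = vecp P52 then P52 else if v = vecp P53 then P53 else if v = vecp P54 then P54 else P55)"

lemma Qinv_Qm: "mat_of_rows_list 8 Qinvrows * mat_of_rows_list 8 (map vecp basL) = 1\<^sub>m 8"
  unfolding one8 by (simp add: mrl_mult_8 Qinvrows_def basL_def I8rows_def)

lemma faithful:
  assumes A: "A \<in> carrier_mat 8 8" and B: "B \<in> carrier_mat 8 8"
    and eq: "\<And>i. i < 8 \<Longrightarrow> rvm (pv (basL!i)) A = rvm (pv (basL!i)) B"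
  shows "A = B"
proof -
  define Q where "Q = mat_of_rows_list 8 (map vecp basL)"
  have len: "length (map vecp basL) = 8" by (simp add: basL_def)
  have Qc: "Q \<in> carrier_mat 8 8" unfolding Q_def using mrl_carrier[of 8 "map vecp basL"] len by simp
  have rowQ: "row Q i = pv (basL ! i)" if i: "i < 8" for i
    unfolding Q_def pv_def using i len by (subst mrl_row) (simp_all add: vecp_len)
  have QAB: "Q * A = Q * B"
  proof (rule eq_rowI)
    fix i assume "i < dim_row (Q * B)"
    then have i: "i < 8" using Qc by simp
    show "row (Q * A) i = row (Q * B) i"
      using row_rvm[OF Qc A i] row_rvm[OF Qc B i] rowQ[OF i] eq[OF i] by simp
  qed (use Qc A B in simp_all)
  define Qi where "Qi = mat_of_rows_list 8 Qinvrows"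
  have Qic: "Qi \<in> carrier_mat 8 8" unfolding Qi_def by (rule mrl_carrier') (simp add: Qinvrows_def)
  have QiQ: "Qi * Q = 1\<^sub>m 8" using Qinv_Qm unfolding Q_def Qi_def .
  have "A = (Qi * Q) * A" using QiQ A by simp
  also have "\<dots> = Qi * (Q * A)" by (rule assoc_mult_mat[OF Qic Qc A])
  also have "\<dots> = Qi * (Q * B)" using QAB by simp
  also have "\<dots> = (Qi * Q) * B" by (rule assoc_mult_mat[OF Qic Qc B, symmetric])
  also have "\<dots> = B" using QiQ B by simp
  finally show ?thesis .
qed

lemma word_eq: "list_all (\<lambda>b. wperm w b = wperm w' b) basL \<Longrightarrow> W8 w = W8 w'"
  by (rule faithful) (simp_all add: word_act list_all_length basL_def)

lemma sch_eq: "W8 (Tw p @ [l]) = W8 (Sg p l @ Tw (act l p))"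
  by (cases p; cases l; rule word_eq; simp add: basL_def act_def)

definition Gl :: "L set" where "Gl = {T34, T45, T56, T67, T78, LX}"
definition Ql :: "L set" where "Ql = {LS, T34, T45, T56, T67, LX}"

lemma sch_G: "set (Sg p l) \<subseteq> Gl"
  by (cases p; cases l) (simp_all add: Gl_def)

lemma schreier: "\<exists>g. set g \<subseteq> Gl \<and> W8 (Tw p @ w) = W8 (g @ Tw (wperm w p))"
proof (induction w arbitrary: p)
  case Nil show ?case by (rule exI[of _ "[]"]) simp
next
  case (Cons l w)
  obtain g where g: "set g \<subseteq> Gl" "W8 (Tw (act l p) @ w) = W8 (g @ Tw (wperm w (act l p)))"
    using Cons.IH by blast
  have "W8 (Tw p @ l # w) = W8 ((Tw p @ [l]) @ w)" by simp
  also have "\<dots> = W8 ((Sg p l @ Tw (act l p)) @ w)" by (rule W8_cong_app[OF sch_eq])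
  also have "\<dots> = W8 (Sg p l) * W8 (Tw (act l p) @ w)" by (subst append_assoc) (rule W8_append)
  also have "\<dots> = W8 (Sg p l) * W8 (g @ Tw (wperm w (act l p)))" using g by simp
  also have "\<dots> = W8 ((Sg p l @ g) @ Tw (wperm w (act l p)))" by (subst append_assoc) (rule W8_append[symmetric])
  finally show ?case using g sch_G[of p l] by (intro exI[of _ "Sg p l @ g"]) auto
qed

lemma carrier_G: "carrier Ggrp = W8 ` {w. set w \<subseteq> Gl}"
proof -
  have "{s2, s3, s4, s5, s6, s3'} = mat8 ` Gl"
    by (simp add: Gl_def s2_def s3_def s4_def s5_def s6_def s3'_def)
  then have "carrier Ggrp = generate (GLm 8) (mat8 ` Gl)" unfolding Ggrp_def by simp
  also have "\<dots> = W8 ` {w. set w \<subseteq> Gl}" by (rule gen_words) (simp_all add: mat8_sq)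
  finally show ?thesis .
qed

lemma carrier_Q: "carrier Qgrp = W8 ` {w. set w \<subseteq> Ql}"
proof -
  have "{s1, s2, s3, s4, s5, s3'} = mat8 ` Ql"
    by (simp add: Ql_def s2_def s3_def s4_def s5_def s3'_def)
  then have "carrier Qgrp = generate (GLm 8) (mat8 ` Ql)" unfolding Qgrp_def by simp
  also have "\<dots> = W8 ` {w. set w \<subseteq> Ql}" by (rule gen_words) (simp_all add: mat8_sq)
  finally show ?thesis .
qed

lemma Ym_word: "Ym = W8 [LS, T23]"
  unfolding Ym_def by (simp add: comp8 mrl_mult_8)

lemma Ym_inv: "inv\<^bsub>GLm 8\<^esub> Ym = W8 [T23, LS]"
proof (rule inv_GLm)
  show "Ym \<in> carrier_mat 8 8" by (metis Ym_word W8_carrier)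
  show "Ym * W8 [T23, LS] = 1\<^sub>m 8" "W8 [T23, LS] * Ym = 1\<^sub>m 8"
    unfolding Ym_def by (simp_all add: comp8 mrl_mult_8)
qed (rule W8_carrier)

lemma letter_in: "mat8 l \<in> range W8 \<and> inv\<^bsub>GLm 8\<^esub> (mat8 l) \<in> range W8"
proof -
  have "inv\<^bsub>GLm 8\<^esub> (mat8 l) = mat8 l" by (rule inv_GLm) (simp_all add: mat8_sq)
  then show ?thesis using W8_single[of l] by (metis rangeI)
qed

lemma carrier_H: "carrier Hgrp = range W8"
proof
  show "carrier Hgrp \<subseteq> range W8" unfolding Hgrp_def gen_grp_simps
  proof (rule gen_sub)
    fix s assume "s \<in> {tmat 8 2 3, tmat 8 3 4, tmat 8 4 5, tmat 8 5 6, tmat 8 6 7, tmat 8 7 8, Xm, Ym}"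
    then have "s = mat8 T23 \<or> s = mat8 T34 \<or> s = mat8 T45 \<or> s = mat8 T56 \<or> s = mat8 T67 \<or>
      s = mat8 T78 \<or> s = mat8 LX \<or> s = Ym" by simp
    moreover have Ym_in: "Ym \<in> range W8 \<and> inv\<^bsub>GLm 8\<^esub> Ym \<in> range W8"
      by (metis Ym_word Ym_inv rangeI)
    ultimately show "s \<in> range W8 \<and> inv\<^bsub>GLm 8\<^esub> s \<in> range W8"
      by (elim disjE; simp only: letter_in Ym_in)
  next
    show "1\<^sub>m 8 \<in> range W8" by (metis wprod.simps(1) rangeI)
  next
    fix a b assume "a \<in> range W8" "b \<in> range W8"
    then obtain u v where uv: "a = W8 u" "b = W8 v" by auto
    then have "a * b = W8 (u @ v)" by (simp add: W8_append)
    then show "a * b \<in> range W8" using rangeI[of W8 "u @ v"] by simp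
  qed
next
  show "range W8 \<subseteq> carrier Hgrp"
  proof
    fix x assume "x \<in> range W8"
    then obtain w where x: "x = W8 w" by auto
    let ?S = "{tmat 8 2 3, tmat 8 3 4, tmat 8 4 5, tmat 8 5 6, tmat 8 6 7, tmat 8 7 8, Xm, Ym}"
    have lt: "mat8 l \<in> generate (GLm 8) ?S" for l
    proof (cases l)
      case LS
      have "Ym \<otimes>\<^bsub>GLm 8\<^esub> tmat 8 2 3 \<in> generate (GLm 8) ?S"
        by (intro generate.eng generate.incl) auto
      then show ?thesis using LS by (simp add: s1_def)
    qed (auto intro: generate.incl)
    have "W8 w \<in> generate (GLm 8) ?S"
    proof (induction w)
      case Nil show ?case using generate.one[of "GLm 8" ?S] by simp
    next
      case (Cons l w)
      from generate.eng[OF lt Cons.IH] show ?case by simp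
    qed
    then show "x \<in> carrier Hgrp" unfolding x Hgrp_def gen_grp_simps .
  qed
qed

lemma Hmult[simp]: "mult Hgrp = (*)" by (simp add: Hgrp_def)

section \<open>Cosets of G\<close>

definition cls :: "P \<Rightarrow> complex mat set" where "cls p = {\<alpha> \<in> carrier Hgrp. row \<alpha> 1 = pv p}"

lemma pv_P0: "pv P0 = unit_vec 8 1"
proof (rule eq_vecI)
  fix i assume "i < dim_vec (unit_vec 8 1 :: complex vec)"
  then have "i < 8" by simp
  then show "pv P0 $ i = unit_vec 8 1 $ i" unfolding less8
    by (elim disjE) (simp_all add: pv_index)
qed simp

lemma row1: "row (W8 w) 1 = pv (wperm w P0)"
proof -
  have "row (W8 w) 1 = rvm (unit_vec 8 1) (W8 w)" by (rule row_unit_rvm[of _ 8 8]) simp_all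
  also have "\<dots> = rvm (pv P0) (W8 w)" by (simp only: pv_P0)
  also have "\<dots> = pv (wperm w P0)" by (rule word_act)
  finally show ?thesis .
qed

lemma pdec_vecp: "pdec (vecp p) = p"
  by (cases p) (simp_all add: pdec_def)

lemma pv_inj: "pv p = pv q \<Longrightarrow> p = q"
  by (metis pdec_vecp pv_def list_vec)

lemma Tw_ok: "wperm (Tw p) P0 = p"
  by (cases p) (simp_all add: act_def)

lemma G_fix: "set g \<subseteq> Gl \<Longrightarrow> wperm g P0 = P0"
proof (induction g)
  case (Cons l g)
  have "act l P0 = P0" using Cons.prems by (auto simp: Gl_def act_def)
  then show ?case using Cons by simp
qed simp

lemma W8_in_cls: "W8 w \<in> cls (wperm w P0)"
  unfolding cls_def carrier_H using row1[of w] by simp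

lemma cls_W8: "\<alpha> \<in> cls p \<Longrightarrow> \<exists>w. \<alpha> = W8 w \<and> wperm w P0 = p"
  unfolding cls_def carrier_H using row1 pv_inj by fastforce

lemma coset_G: "carrier Ggrp #>\<^bsub>Hgrp\<^esub> W8 w = cls (wperm w P0)"
proof
  show "carrier Ggrp #>\<^bsub>Hgrp\<^esub> W8 w \<subseteq> cls (wperm w P0)"
  proof
    fix x assume "x \<in> carrier Ggrp #>\<^bsub>Hgrp\<^esub> W8 w"
    then obtain g where g: "set g \<subseteq> Gl" "x = W8 g * W8 w"
      unfolding r_coset_def carrier_G by auto
    then have "x = W8 (g @ w)" by (simp add: W8_append)
    then show "x \<in> cls (wperm w P0)" using W8_in_cls[of "g @ w"] G_fix[OF g(1)] by simp
  qed
next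
  show "cls (wperm w P0) \<subseteq> carrier Ggrp #>\<^bsub>Hgrp\<^esub> W8 w"
  proof
    fix \<beta> assume "\<beta> \<in> cls (wperm w P0)"
    then obtain w' where w': "\<beta> = W8 w'" "wperm w' P0 = wperm w P0" using cls_W8 by blast
    define q where "q = wperm w P0"
    obtain g' where g': "set g' \<subseteq> Gl" "W8 (Tw P0 @ w') = W8 (g' @ Tw (wperm w' P0))"
      using schreier by blast
    obtain g where g: "set g \<subseteq> Gl" "W8 (Tw P0 @ w) = W8 (g @ Tw (wperm w P0))"
      using schreier by blast
    have e1: "W8 w' = W8 (g' @ Tw q)" using g'(2) w'(2) by (simp add: q_def)
    have e2: "W8 w = W8 (g @ Tw q)" using g(2) by (simp add: q_def)
    have "W8 (g' @ rev g) * W8 w = W8 (g' @ (rev g @ w))" by (simp only: W8_append[symmetric] append_assoc)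
    also have "\<dots> = W8 (g' @ (rev g @ g @ Tw q))" by (rule W8_cong_pre[OF W8_cong_pre[OF e2]])
    also have "\<dots> = W8 (g' @ Tw q)" by (rule W8_cong_pre[OF W8_rev_cancel])
    also have "\<dots> = W8 w'" using e1 by simp
    finally have "\<beta> = W8 (g' @ rev g) * W8 w" using w'(1) by simp
    moreover have "W8 (g' @ rev g) \<in> carrier Ggrp" using g g' unfolding carrier_G by auto
    ultimately show "\<beta> \<in> carrier Ggrp #>\<^bsub>Hgrp\<^esub> W8 w" unfolding r_coset_def by auto
  qed
qed

lemma rcosets_eq: "rcosets\<^bsub>Hgrp\<^esub> (carrier Ggrp) = range cls"
proof -
  have "rcosets\<^bsub>Hgrp\<^esub> (carrier Ggrp) = (\<Union>w. {cls (wperm w P0)})"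
    unfolding RCOSETS_def carrier_H by (simp add: coset_G)
  also have "\<dots> = range cls"
  proof
    show "(\<Union>w. {cls (wperm w P0)}) \<subseteq> range cls" by auto
    show "range cls \<subseteq> (\<Union>w. {cls (wperm w P0)})"
    proof
      fix C assume "C \<in> range cls"
      then obtain p where "C = cls p" by auto
      then have "C = cls (wperm (Tw p) P0)" by (simp add: Tw_ok)
      then show "C \<in> (\<Union>w. {cls (wperm w P0)})" by blast
    qed
  qed
  finally show ?thesis .
qed

lemma cls_rcoset: "cls p #>\<^bsub>Hgrp\<^esub> W8 w = cls (wperm w p)"
proof
  show "cls p #>\<^bsub>Hgrp\<^esub> W8 w \<subseteq> cls (wperm w p)"
  proof
    fix x assume "x \<in> cls p #>\<^bsub>Hgrp\<^esub> W8 w"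
    then obtain h where h: "h \<in> cls p" "x = h * W8 w" unfolding r_coset_def by auto
    obtain u where u: "h = W8 u" "wperm u P0 = p" using cls_W8[OF h(1)] by blast
    have "x = W8 (u @ w)" using h u by (simp add: W8_append)
    then show "x \<in> cls (wperm w p)" using W8_in_cls[of "u @ w"] u by simp
  qed
next
  show "cls (wperm w p) \<subseteq> cls p #>\<^bsub>Hgrp\<^esub> W8 w"
  proof
    fix x assume "x \<in> cls (wperm w p)"
    then obtain u where u: "x = W8 u" "wperm u P0 = wperm w p" using cls_W8 by blast
    have "W8 (u @ rev w) * W8 w = W8 (u @ (rev w @ w))" by (simp only: W8_append[symmetric] append_assoc)
    also have "\<dots> = W8 (u @ [])" using W8_cong_pre[OF W8_rev_cancel[of w "[]"], of u] by simp
    finally have x: "x = W8 (u @ rev w) * W8 w" using u by simp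
    have "W8 (u @ rev w) \<in> cls p"
      using W8_in_cls[of "u @ rev w"] u(2) by simp
    then show "x \<in> cls p #>\<^bsub>Hgrp\<^esub> W8 w" unfolding r_coset_def x by auto
  qed
qed

definition Qorb :: "P \<Rightarrow> P set" where "Qorb p = {wperm w p | w. set w \<subseteq> Ql}"

lemma Q_orbit_cls: "Q_orbit (cls p) = cls ` Qorb p"
  unfolding Q_orbit_def carrier_Q Qorb_def using cls_rcoset by auto

lemma Q_orbits_eq: "Q_orbits = range (\<lambda>p. cls ` Qorb p)"
  unfolding Q_orbits_def rcosets_eq by (simp add: image_image Q_orbit_cls)

section \<open>Orbit computation\<close>

lemma Qorb_sub: assumes "\<And>l q. l \<in> Ql \<Longrightarrow> q \<in> S \<Longrightarrow> act l q \<in> S" "p \<in> S" shows "Qorb p \<subseteq> S"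
proof
  fix x assume "x \<in> Qorb p"
  then obtain w where w: "x = wperm w p" "set w \<subseteq> Ql" unfolding Qorb_def by auto
  have "wperm w p \<in> S" using w(2) assms(2)
    by (induction w arbitrary: p) (use assms(1) in auto)
  then show "x \<in> S" using w by simp
qed

lemma Qorb_trans: assumes "q \<in> Qorb p" shows "Qorb q \<subseteq> Qorb p"
proof
  fix x assume "x \<in> Qorb q"
  then obtain w2 where 2: "x = wperm w2 q" "set w2 \<subseteq> Ql" unfolding Qorb_def by auto
  obtain w1 where 1: "q = wperm w1 p" "set w1 \<subseteq> Ql" using assms unfolding Qorb_def by auto
  have "x = wperm (w1 @ w2) p" "set (w1 @ w2) \<subseteq> Ql" using 1 2 by auto
  then show "x \<in> Qorb p" unfolding Qorb_def by blast
qed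

lemma Qorb_sym: assumes "q \<in> Qorb p" shows "p \<in> Qorb q"
proof -
  obtain w where w: "q = wperm w p" "set w \<subseteq> Ql" using assms unfolding Qorb_def by auto
  then have "p = wperm (rev w) q" "set (rev w) \<subseteq> Ql" by auto
  then show ?thesis unfolding Qorb_def by blast
qed

lemma Qorb_eqI:
  assumes "\<And>l q. l \<in> Ql \<Longrightarrow> q \<in> S \<Longrightarrow> act l q \<in> S" "S \<subseteq> Qorb b" "p \<in> S"
  shows "Qorb p = S"
proof
  show "Qorb p \<subseteq> S" using Qorb_sub[OF assms(1) assms(3)] .
  have "b \<in> Qorb p" using assms(2,3) Qorb_sym by blast
  then show "S \<subseteq> Qorb p" using assms(2) Qorb_trans by blast
qed

definition S1 :: "P set" where "S1 = {P30, P19, P10, P5, P2, P0, P31, P44, P42, P29, P39, P51}"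

definition S2 :: "P set" where "S2 = {P38, P50, P55, P52, P45, P32, P37, P25, P14, P22, P35, P48}"

definition S3 :: "P set" where "S3 = {P43, P49, P54, P53, P46, P33, P20, P47, P34, P21, P11, P24, P13, P6, P8, P3, P1, P41, P28, P18, P26, P40, P17, P9, P15, P27, P4, P7, P16, P12, P23, P36}"

primrec Ow :: "P \<Rightarrow> L list" where
  "Ow P0 = [T67, T56, T45, T34, LS]"
| "Ow P1 = [LX, T56, T45, T67, T56, LX]"
| "Ow P2 = [T67, T56, T45, T34]"
| "Ow P3 = [LX, T56, T45, T34, T67, T56, LX]"
| "Ow P4 = [LX, T56, T45, T67, T56]"
| "Ow P5 = [T67, T56, T45]"
| "Ow P6 = [LX, T56, T45, T34, T67, T56, T45, LX]"
| "Ow P7 = [LX, T56, T45, T34, T67, T56]"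
| "Ow P8 = [LX, T56, T45, T34, LS, T67, T56, LX]"
| "Ow P9 = [LX, T56, T45, T67]"
| "Ow P10 = [T67, T56]"
| "Ow P11 = [LX, T56, T45, T34, T67, T56, T45, LX, T56]"
| "Ow P12 = [LX, T56, T45, T34, T67, T56, T45]"
| "Ow P13 = [LX, T56, T45, T34, LS, T67, T56, T45, LX]"
| "Ow P14 = [LX, T56]"
| "Ow P15 = [LX, T56, T45, T34, T67]"
| "Ow P16 = [LX, T56, T45, T34, LS, T67, T56]"
| "Ow P17 = [LX, T56, T67]"
| "Ow P18 = [LX, T56, T45]"
| "Ow P19 = [T67]"
| "Ow P20 = [LX, T56, T45, T34, T67, T56, T45, LX, T56, T67]"
| "Ow P21 = [LX, T56, T45, T34, LS, T67, T56, T45, LX, T56]"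
| "Ow P22 = [LX, T56, T45]"
| "Ow P23 = [LX, T56, T45, T34, LS, T67, T56, T45]"
| "Ow P24 = [LX, T56, T45, T34, LS, T67, T56, T45, T34, LX]"
| "Ow P25 = [LX]"
| "Ow P26 = [LX, T56, T45, T34]"
| "Ow P27 = [LX, T56, T45, T34, LS, T67]"
| "Ow P28 = [LX, T56]"
| "Ow P29 = [LX, T56, T45]"
| "Ow P30 = []"
| "Ow P31 = [T67, LX]"
| "Ow P32 = [T67, T56, T45, T34, LS]"
| "Ow P33 = [LX, T56, T45, T34, LS, T67, T56, T45, LX, T56, T67]"
| "Ow P34 = [LX, T56, T45, T34, LS, T67, T56, T45, T34, LX, T56]"
| "Ow P35 = [LX, T56, T45, T34]"
| "Ow P36 = [LX, T56, T45, T34, LS, T67, T56, T45, T34]"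
| "Ow P37 = [T67, LX]"
| "Ow P38 = []"
| "Ow P39 = [LX, T56, T45, T34]"
| "Ow P40 = [LX, T56, T45, T34, LS]"
| "Ow P41 = [LX]"
| "Ow P42 = [LX, T56]"
| "Ow P43 = []"
| "Ow P44 = [LX]"
| "Ow P45 = [T67, T56, T45, T34]"
| "Ow P46 = [LX, T56, T45, T34, LS, T67, T56, T45, T34, LX, T56, T67]"
| "Ow P47 = [LX, T56, T45, T34, LS, T67, T56, T45, T34, LX, T56, T45]"
| "Ow P48 = [LX, T56, T45, T34, LS]"
| "Ow P49 = [LX, T56, T45, T34, LS, T67, T56, T45, T34, LX, T56, T45, T67, T56, LX]"
| "Ow P50 = [T67]"
| "Ow P51 = [LX, T56, T45, T34, LS]"
| "Ow P52 = [T67, T56, T45]"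
| "Ow P53 = [LX, T56, T45, T34, LS, T67, T56, T45, T34, LX, T56, T45, T67]"
| "Ow P54 = [LX, T56, T45, T34, LS, T67, T56, T45, T34, LX, T56, T45, T67, T56]"
| "Ow P55 = [T67, T56]"

primrec obase :: "P \<Rightarrow> P" where
  "obase P0 = P30"
| "obase P1 = P43"
| "obase P2 = P30"
| "obase P3 = P43"
| "obase P4 = P43"
| "obase P5 = P30"
| "obase P6 = P43"
| "obase P7 = P43"
| "obase P8 = P43"
| "obase P9 = P43"
| "obase P10 = P30"
| "obase P11 = P43"
| "obase P12 = P43"
| "obase P13 = P43"
| "obase P14 = P38"
| "obase P15 = P43"
| "obase P16 = P43"
| "obase P17 = P43"
| "obase P18 = P43"
| "obase P19 = P30"
| "obase P20 = P43"
| "obase P21 = P43"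
| "obase P22 = P38"
| "obase P23 = P43"
| "obase P24 = P43"
| "obase P25 = P38"
| "obase P26 = P43"
| "obase P27 = P43"
| "obase P28 = P43"
| "obase P29 = P30"
| "obase P30 = P30"
| "obase P31 = P30"
| "obase P32 = P38"
| "obase P33 = P43"
| "obase P34 = P43"
| "obase P35 = P38"
| "obase P36 = P43"
| "obase P37 = P38"
| "obase P38 = P38"
| "obase P39 = P30"
| "obase P40 = P43"
| "obase P41 = P43"
| "obase P42 = P30"
| "obase P43 = P43"
| "obase P44 = P30"
| "obase P45 = P38"
| "obase P46 = P43"
| "obase P47 = P43"
| "obase P48 = P38"
| "obase P49 = P43"
| "obase P50 = P38"
| "obase P51 = P30"
| "obase P52 = P38"
| "obase P53 = P43"
| "obase P54 = P43"
| "obase P55 = P38"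

lemma Ow_ok: "wperm (Ow q) (obase q) = q \<and> set (Ow q) \<subseteq> Ql"
  by (cases q) (simp_all add: act_def Ql_def)

lemma in_Qorb_base: "q \<in> Qorb (obase q)"
proof -
  have "q = wperm (Ow q) (obase q)" "set (Ow q) \<subseteq> Ql" using Ow_ok[of q] by auto
  then show ?thesis unfolding Qorb_def by blast
qed

lemma S1_closed: "l \<in> Ql \<Longrightarrow> q \<in> S1 \<Longrightarrow> act l q \<in> S1"
  by (auto simp: Ql_def S1_def act_def)
lemma S2_closed: "l \<in> Ql \<Longrightarrow> q \<in> S2 \<Longrightarrow> act l q \<in> S2"
  by (auto simp: Ql_def S2_def act_def)
lemma S3_closed: "l \<in> Ql \<Longrightarrow> q \<in> S3 \<Longrightarrow> act l q \<in> S3"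
  by (auto simp: Ql_def S3_def act_def)

lemma S1_reach: "S1 \<subseteq> Qorb P30"
proof
  fix q assume "q \<in> S1" then have "obase q = P30" by (auto simp: S1_def)
  then show "q \<in> Qorb P30" using in_Qorb_base[of q] by simp
qed
lemma S2_reach: "S2 \<subseteq> Qorb P38"
proof
  fix q assume "q \<in> S2" then have "obase q = P38" by (auto simp: S2_def)
  then show "q \<in> Qorb P38" using in_Qorb_base[of q] by simp
qed
lemma S3_reach: "S3 \<subseteq> Qorb P43"
proof
  fix q assume "q \<in> S3" then have "obase q = P43" by (auto simp: S3_def)
  then show "q \<in> Qorb P43" using in_Qorb_base[of q] by simp
qed

lemma S_cover: "p \<in> S1 \<or> p \<in> S2 \<or> p \<in> S3"
  by (cases p) (simp_all add: S1_def S2_def S3_def)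

lemma Qorb_cases: "Qorb p = S1 \<or> Qorb p = S2 \<or> Qorb p = S3"
  using S_cover[of p] Qorb_eqI[OF S1_closed S1_reach] Qorb_eqI[OF S2_closed S2_reach]
    Qorb_eqI[OF S3_closed S3_reach] by blast

lemma base_in: "P30 \<in> S1" "P38 \<in> S2" "P43 \<in> S3"
  by (simp_all add: S1_def S2_def S3_def)

lemma orbits_three: "range (\<lambda>p. cls ` Qorb p) = {cls ` S1, cls ` S2, cls ` S3}"
proof
  show "range (\<lambda>p. cls ` Qorb p) \<subseteq> {cls ` S1, cls ` S2, cls ` S3}"
    using Qorb_cases by blast
  have "Qorb P30 = S1" "Qorb P38 = S2" "Qorb P43 = S3"
    using Qorb_eqI[OF S1_closed S1_reach base_in(1)] Qorb_eqI[OF S2_closed S2_reach base_in(2)]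
      Qorb_eqI[OF S3_closed S3_reach base_in(3)] by blast+
  then have "cls ` S1 \<in> range (\<lambda>p. cls ` Qorb p)" "cls ` S2 \<in> range (\<lambda>p. cls ` Qorb p)"
    "cls ` S3 \<in> range (\<lambda>p. cls ` Qorb p)"
    using rangeI[of "\<lambda>p. cls ` Qorb p" P30] rangeI[of "\<lambda>p. cls ` Qorb p" P38]
      rangeI[of "\<lambda>p. cls ` Qorb p" P43] by simp_all
  then show "{cls ` S1, cls ` S2, cls ` S3} \<subseteq> range (\<lambda>p. cls ` Qorb p)" by simp
qed

lemma cls_inj: "inj cls"
proof (rule injI)
  fix p q assume "cls p = cls q"
  then have "W8 (Tw p) \<in> cls q" using W8_in_cls[of "Tw p"] by (simp add: Tw_ok)
  then obtain w where "W8 (Tw p) = W8 w" "wperm w P0 = q" using cls_W8 by blast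
  then have "pv p = pv q" using row1[of "Tw p"] row1[of w] by (simp add: Tw_ok)
  then show "p = q" by (rule pv_inj)
qed

lemma card_three: "card {cls ` S1, cls ` S2, cls ` S3} = 3"
proof -
  have n: "P30 \<notin> S2" "P30 \<notin> S3" "P38 \<notin> S3" by (simp_all add: S2_def S3_def)
  have d: "S1 \<noteq> S2" "S1 \<noteq> S3" "S2 \<noteq> S3" using base_in n by blast+
  then have "cls ` S1 \<noteq> cls ` S2" "cls ` S1 \<noteq> cls ` S3" "cls ` S2 \<noteq> cls ` S3"
    by (simp_all add: inj_image_eq_iff[OF cls_inj])
  then show ?thesis by simp
qed

lemma sum8: "(\<Sum>i\<in>{0..<8::nat}. f i) = f 0 + f 1 + f 2 + f 3 + f 4 + f 5 + f 6 + f 7"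
proof -
  have "{0..<8::nat} = {0,1,2,3,4,5,6,7}" by auto
  then show ?thesis by (simp add: add.assoc)
qed

lemma sp8: assumes "r \<in> carrier_vec 8" "w \<in> carrier_vec 8"
  shows "r \<bullet> w = r$0*w$0 + r$1*w$1 + r$2*w$2 + r$3*w$3 + r$4*w$4 + r$5*w$5 + r$6*w$6 + r$7*w$7"
  using assms by (simp add: scalar_prod_def sum8)

lemma sp8_vol: assumes r: "r \<in> carrier_vec 8" and len: "length xs = 8"
  shows "r \<bullet> vec_of_list xs = r$0 * xs!0 + r$1 * xs!1 + r$2 * xs!2 + r$3 * xs!3 + r$4 * xs!4 + r$5 * xs!5 + r$6 * xs!6 + r$7 * xs!7"
proof -
  have w: "vec_of_list xs \<in> carrier_vec 8" unfolding carrier_vec_def using len by simp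
  show ?thesis using sp8[OF r w] by (simp only: vec_of_list_index)
qed

lemma Wtest:
  assumes r: "r \<in> carrier_vec 8" and r': "r' \<in> carrier_vec 8" and eq: "\<forall>w\<in>Wset. r \<bullet> w = r' \<bullet> w"
  shows "r = r'"
proof -
  have t: "r \<bullet> vec_of_list xs = r' \<bullet> vec_of_list xs"
    if "length xs = 8" "2 + 3 * xs!0 = xs!1 + xs!2 + xs!3 + xs!4 + xs!5 + xs!6 + xs!7" for xs
  proof -
    have "vec_of_list xs \<in> carrier_vec 8" unfolding carrier_vec_def using that by simp
    then have "vec_of_list xs \<in> Wset" unfolding Wset_def using that by (simp add: vec_of_list_index)
    then show ?thesis using eq by blast
  qed
  have c1: "r$1 = r'$1" using t[of "[0,2,0,0,0,0,0,0]"] by (simp add: sp8_vol[OF r] sp8_vol[OF r'] del: vec_of_list_Cons)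
  have c2: "r$2 = r'$2" using t[of "[0,0,2,0,0,0,0,0]"] by (simp add: sp8_vol[OF r] sp8_vol[OF r'] del: vec_of_list_Cons)
  have c3: "r$3 = r'$3" using t[of "[0,0,0,2,0,0,0,0]"] by (simp add: sp8_vol[OF r] sp8_vol[OF r'] del: vec_of_list_Cons)
  have c4: "r$4 = r'$4" using t[of "[0,0,0,0,2,0,0,0]"] by (simp add: sp8_vol[OF r] sp8_vol[OF r'] del: vec_of_list_Cons)
  have c5: "r$5 = r'$5" using t[of "[0,0,0,0,0,2,0,0]"] by (simp add: sp8_vol[OF r] sp8_vol[OF r'] del: vec_of_list_Cons)
  have c6: "r$6 = r'$6" using t[of "[0,0,0,0,0,0,2,0]"] by (simp add: sp8_vol[OF r] sp8_vol[OF r'] del: vec_of_list_Cons)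
  have c7: "r$7 = r'$7" using t[of "[0,0,0,0,0,0,0,2]"] by (simp add: sp8_vol[OF r] sp8_vol[OF r'] del: vec_of_list_Cons)
  have c0: "r$0 = r'$0" using t[of "[1,5,0,0,0,0,0,0]"] c1 by (simp add: sp8_vol[OF r] sp8_vol[OF r'] del: vec_of_list_Cons)
  show ?thesis
  proof (rule eq_vecI)
    fix i assume "i < dim_vec r'" then have "i < 8" using r' by simp
    then show "r $ i = r' $ i" unfolding less8 using c0 c1 c2 c3 c4 c5 c6 c7 by (elim disjE) simp_all
  qed (use r r' in simp)
qed

lemma cls_char:
  assumes F: "\<forall>w\<in>Wset. pv p \<bullet> w = F w"
  shows "{\<alpha> \<in> carrier Hgrp. \<forall>w\<in>Wset. (\<alpha> *\<^sub>v w) $ 1 = F w} = cls p"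
proof -
  have "(\<forall>w\<in>Wset. (\<alpha> *\<^sub>v w) $ 1 = F w) \<longleftrightarrow> row \<alpha> 1 = pv p" if a: "\<alpha> \<in> carrier Hgrp" for \<alpha>
  proof -
    have ac: "\<alpha> \<in> carrier_mat 8 8" using a unfolding carrier_H by auto
    have rc: "row \<alpha> 1 \<in> carrier_vec 8" using ac by (intro row_carrier_vec[of 1 8]) simp_all
    have "(\<alpha> *\<^sub>v w) $ 1 = row \<alpha> 1 \<bullet> w" for w using ac by simp
    then have "(\<forall>w\<in>Wset. (\<alpha> *\<^sub>v w) $ 1 = F w) \<longleftrightarrow> (\<forall>w\<in>Wset. row \<alpha> 1 \<bullet> w = pv p \<bullet> w)"
      using F by auto
    also have "\<dots> \<longleftrightarrow> row \<alpha> 1 = pv p" using Wtest[OF rc pv_carrier[of p]] by auto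
    finally show ?thesis .
  qed
  then show ?thesis unfolding cls_def by auto
qed

lemma Wset_carrier: "w \<in> Wset \<Longrightarrow> w \<in> carrier_vec 8" by (simp add: Wset_def)

lemma one_W: assumes "w \<in> Wset" shows "(w$1 + w$2 + w$3 + w$4 + w$5 + w$6 + w$7 - 3 * w$0) / 2 = 1"
proof -
  have h: "w$1 + w$2 + w$3 + w$4 + w$5 + w$6 + w$7 = 2 + 3 * w$0" using assms by (simp add: Wset_def)
  show ?thesis unfolding h by simp
qed

lemma vpos_inst:
  assumes A: "\<forall>w\<in>carrier_vec 8. pv p \<bullet> w = xc i w + xc j w - xc 7 w"
  shows "vpos i j = cls p"
  unfolding vpos_def by (rule cls_char) (use A Wset_carrier in blast)

lemma vneg_inst:
  assumes A: "\<forall>w\<in>carrier_vec 8. pv p \<bullet> w = (w$1 + w$2 + w$3 + w$4 + w$5 + w$6 + w$7 - 3 * w$0) / 2 + xc 7 w - xc i w - xc j w"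
  shows "vneg i j = cls p"
  unfolding vneg_def
proof (rule cls_char, intro ballI)
  fix w assume w: "w \<in> Wset"
  show "pv p \<bullet> w = 1 + xc 7 w - xc i w - xc j w" using A Wset_carrier[OF w] one_W[OF w] by simp
qed

lemma vp_0_1: "vpos 0 1 = cls P43"
  by (rule vpos_inst) (simp add: xc_def sp8 pv_index field_simps)

lemma vn_0_1: "vneg 0 1 = cls P49"
  by (rule vneg_inst) (simp add: xc_def sp8 pv_index field_simps)

lemma vp_0_2: "vpos 0 2 = cls P30"
  by (rule vpos_inst) (simp add: xc_def sp8 pv_index field_simps)

lemma vn_0_2: "vneg 0 2 = cls P37"
  by (rule vneg_inst) (simp add: xc_def sp8 pv_index field_simps)

lemma vp_0_3: "vpos 0 3 = cls P19"
  by (rule vpos_inst) (simp add: xc_def sp8 pv_index field_simps)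

lemma vn_0_3: "vneg 0 3 = cls P25"
  by (rule vneg_inst) (simp add: xc_def sp8 pv_index field_simps)

lemma vp_0_4: "vpos 0 4 = cls P10"
  by (rule vpos_inst) (simp add: xc_def sp8 pv_index field_simps)

lemma vn_0_4: "vneg 0 4 = cls P14"
  by (rule vneg_inst) (simp add: xc_def sp8 pv_index field_simps)

lemma vp_0_5: "vpos 0 5 = cls P5"
  by (rule vpos_inst) (simp add: xc_def sp8 pv_index field_simps)

lemma vn_0_5: "vneg 0 5 = cls P22"
  by (rule vneg_inst) (simp add: xc_def sp8 pv_index field_simps)

lemma vp_0_6: "vpos 0 6 = cls P2"
  by (rule vpos_inst) (simp add: xc_def sp8 pv_index field_simps)

lemma vn_0_6: "vneg 0 6 = cls P35"
  by (rule vneg_inst) (simp add: xc_def sp8 pv_index field_simps)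

lemma vp_0_7: "vpos 0 7 = cls P0"
  by (rule vpos_inst) (simp add: xc_def sp8 pv_index field_simps)

lemma vn_0_7: "vneg 0 7 = cls P48"
  by (rule vneg_inst) (simp add: xc_def sp8 pv_index field_simps)

lemma vp_1_2: "vpos 1 2 = cls P38"
  by (rule vpos_inst) (simp add: xc_def sp8 pv_index field_simps)

lemma vn_1_2: "vneg 1 2 = cls P31"
  by (rule vneg_inst) (simp add: xc_def sp8 pv_index field_simps)

lemma vp_1_3: "vpos 1 3 = cls P50"
  by (rule vpos_inst) (simp add: xc_def sp8 pv_index field_simps)

lemma vn_1_3: "vneg 1 3 = cls P44"
  by (rule vneg_inst) (simp add: xc_def sp8 pv_index field_simps)

lemma vp_1_4: "vpos 1 4 = cls P55"
  by (rule vpos_inst) (simp add: xc_def sp8 pv_index field_simps)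

lemma vn_1_4: "vneg 1 4 = cls P42"
  by (rule vneg_inst) (simp add: xc_def sp8 pv_index field_simps)

lemma vp_1_5: "vpos 1 5 = cls P52"
  by (rule vpos_inst) (simp add: xc_def sp8 pv_index field_simps)

lemma vn_1_5: "vneg 1 5 = cls P29"
  by (rule vneg_inst) (simp add: xc_def sp8 pv_index field_simps)

lemma vp_1_6: "vpos 1 6 = cls P45"
  by (rule vpos_inst) (simp add: xc_def sp8 pv_index field_simps)

lemma vn_1_6: "vneg 1 6 = cls P39"
  by (rule vneg_inst) (simp add: xc_def sp8 pv_index field_simps)

lemma vp_1_7: "vpos 1 7 = cls P32"
  by (rule vpos_inst) (simp add: xc_def sp8 pv_index field_simps)

lemma vn_1_7: "vneg 1 7 = cls P51"
  by (rule vneg_inst) (simp add: xc_def sp8 pv_index field_simps)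

lemma vp_2_3: "vpos 2 3 = cls P54"
  by (rule vpos_inst) (simp add: xc_def sp8 pv_index field_simps)

lemma vn_2_3: "vneg 2 3 = cls P41"
  by (rule vneg_inst) (simp add: xc_def sp8 pv_index field_simps)

lemma vp_2_4: "vpos 2 4 = cls P53"
  by (rule vpos_inst) (simp add: xc_def sp8 pv_index field_simps)

lemma vn_2_4: "vneg 2 4 = cls P28"
  by (rule vneg_inst) (simp add: xc_def sp8 pv_index field_simps)

lemma vp_2_5: "vpos 2 5 = cls P46"
  by (rule vpos_inst) (simp add: xc_def sp8 pv_index field_simps)

lemma vn_2_5: "vneg 2 5 = cls P18"
  by (rule vneg_inst) (simp add: xc_def sp8 pv_index field_simps)

lemma vp_2_6: "vpos 2 6 = cls P33"
  by (rule vpos_inst) (simp add: xc_def sp8 pv_index field_simps)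

lemma vn_2_6: "vneg 2 6 = cls P26"
  by (rule vneg_inst) (simp add: xc_def sp8 pv_index field_simps)

lemma vp_2_7: "vpos 2 7 = cls P20"
  by (rule vpos_inst) (simp add: xc_def sp8 pv_index field_simps)

lemma vn_2_7: "vneg 2 7 = cls P40"
  by (rule vneg_inst) (simp add: xc_def sp8 pv_index field_simps)

lemma vp_3_4: "vpos 3 4 = cls P47"
  by (rule vpos_inst) (simp add: xc_def sp8 pv_index field_simps)

lemma vn_3_4: "vneg 3 4 = cls P17"
  by (rule vneg_inst) (simp add: xc_def sp8 pv_index field_simps)

lemma vp_3_5: "vpos 3 5 = cls P34"
  by (rule vpos_inst) (simp add: xc_def sp8 pv_index field_simps)

lemma vn_3_5: "vneg 3 5 = cls P9"
  by (rule vneg_inst) (simp add: xc_def sp8 pv_index field_simps)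

lemma vp_3_6: "vpos 3 6 = cls P21"
  by (rule vpos_inst) (simp add: xc_def sp8 pv_index field_simps)

lemma vn_3_6: "vneg 3 6 = cls P15"
  by (rule vneg_inst) (simp add: xc_def sp8 pv_index field_simps)

lemma vp_3_7: "vpos 3 7 = cls P11"
  by (rule vpos_inst) (simp add: xc_def sp8 pv_index field_simps)

lemma vn_3_7: "vneg 3 7 = cls P27"
  by (rule vneg_inst) (simp add: xc_def sp8 pv_index field_simps)

lemma vp_4_5: "vpos 4 5 = cls P24"
  by (rule vpos_inst) (simp add: xc_def sp8 pv_index field_simps)

lemma vn_4_5: "vneg 4 5 = cls P4"
  by (rule vneg_inst) (simp add: xc_def sp8 pv_index field_simps)

lemma vp_4_6: "vpos 4 6 = cls P13"
  by (rule vpos_inst) (simp add: xc_def sp8 pv_index field_simps)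

lemma vn_4_6: "vneg 4 6 = cls P7"
  by (rule vneg_inst) (simp add: xc_def sp8 pv_index field_simps)

lemma vp_4_7: "vpos 4 7 = cls P6"
  by (rule vpos_inst) (simp add: xc_def sp8 pv_index field_simps)

lemma vn_4_7: "vneg 4 7 = cls P16"
  by (rule vneg_inst) (simp add: xc_def sp8 pv_index field_simps)

lemma vp_5_6: "vpos 5 6 = cls P8"
  by (rule vpos_inst) (simp add: xc_def sp8 pv_index field_simps)

lemma vn_5_6: "vneg 5 6 = cls P12"
  by (rule vneg_inst) (simp add: xc_def sp8 pv_index field_simps)

lemma vp_5_7: "vpos 5 7 = cls P3"
  by (rule vpos_inst) (simp add: xc_def sp8 pv_index field_simps)

lemma vn_5_7: "vneg 5 7 = cls P23"
  by (rule vneg_inst) (simp add: xc_def sp8 pv_index field_simps)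

lemma vp_6_7: "vpos 6 7 = cls P1"
  by (rule vpos_inst) (simp add: xc_def sp8 pv_index field_simps)

lemma vn_6_7: "vneg 6 7 = cls P36"
  by (rule vneg_inst) (simp add: xc_def sp8 pv_index field_simps)

lemma c27: "2 \<le> j \<Longrightarrow> j \<le> (7::nat) \<Longrightarrow> j = 2 \<or> j = 3 \<or> j = 4 \<or> j = 5 \<or> j = 6 \<or> j = 7" by arith

lemma set27: "{f j | j. 2 \<le> j \<and> j \<le> (7::nat)} = {f 2, f 3, f 4, f 5, f 6, f 7}"
proof -
  have h: "{j. 2 \<le> j \<and> j \<le> (7::nat)} = {2, 3, 4, 5, 6, 7}" by (auto dest: c27)
  have "{f j | j. 2 \<le> j \<and> j \<le> (7::nat)} = f ` {j. 2 \<le> j \<and> j \<le> (7::nat)}" by blast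
  then show ?thesis unfolding h by simp
qed

lemma pairs27: "{f i j | i j. 2 \<le> i \<and> i < j \<and> j \<le> (7::nat)} = {f 2 3, f 2 4, f 2 5, f 2 6, f 2 7, f 3 4, f 3 5, f 3 6, f 3 7, f 4 5, f 4 6, f 4 7, f 5 6, f 5 7, f 6 7}"
proof -
  have e: "{f i j | i j. 2 \<le> i \<and> i < j \<and> j \<le> (7::nat)} = (\<lambda>(i,j). f i j) ` {(i, j). 2 \<le> i \<and> i < j \<and> j \<le> (7::nat)}"
    by auto
  have p: "{(i, j). 2 \<le> i \<and> i < j \<and> j \<le> (7::nat)} = {(2, 3), (2, 4), (2, 5), (2, 6), (2, 7), (3, 4), (3, 5), (3, 6), (3, 7), (4, 5), (4, 6), (4, 7), (5, 6), (5, 7), (6, 7)}"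
  proof (intro equalityI subsetI)
    fix x assume x: "x \<in> {(i, j). 2 \<le> i \<and> i < j \<and> j \<le> (7::nat)}"
    obtain i j where ij: "x = (i, j)" by (cases x)
    have c: "2 \<le> i" "i < j" "j \<le> (7::nat)" using x ij by auto
    have "i = 2 \<or> i = 3 \<or> i = 4 \<or> i = 5 \<or> i = 6" using c by arith
    moreover have "j = 3 \<or> j = 4 \<or> j = 5 \<or> j = 6 \<or> j = 7" using c by arith
    ultimately show "x \<in> {(2, 3), (2, 4), (2, 5), (2, 6), (2, 7), (3, 4), (3, 5), (3, 6), (3, 7), (4, 5), (4, 6), (4, 7), (5, 6), (5, 7), (6, 7)}" using c ij by (elim disjE) simp_all
  qed auto
  show ?thesis unfolding e p by simp
qed

lemma O1_eq: "O1 = cls ` S1"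
  unfolding O1_def set27 S1_def vp_0_2 vp_0_3 vp_0_4 vp_0_5 vp_0_6 vp_0_7 vn_1_2 vn_1_3 vn_1_4 vn_1_5 vn_1_6 vn_1_7
  by (simp only: image_insert image_empty Un_insert_left Un_empty_left)

lemma O2_eq: "O2 = cls ` S2"
  unfolding O2_def set27 S2_def vp_1_2 vp_1_3 vp_1_4 vp_1_5 vp_1_6 vp_1_7 vn_0_2 vn_0_3 vn_0_4 vn_0_5 vn_0_6 vn_0_7
  by (simp only: image_insert image_empty Un_insert_left Un_empty_left)

lemma O3_eq: "O3 = cls ` S3"
  unfolding O3_def pairs27[of vpos] pairs27[of vneg] S3_def vp_0_1 vn_0_1 vp_0_2 vn_0_2 vp_0_3 vn_0_3 vp_0_4 vn_0_4 vp_0_5 vn_0_5 vp_0_6 vn_0_6 vp_0_7 vn_0_7 vp_1_2 vn_1_2 vp_1_3 vn_1_3 vp_1_4 vn_1_4 vp_1_5 vn_1_5 vp_1_6 vn_1_6 vp_1_7 vn_1_7 vp_2_3 vn_2_3 vp_2_4 vn_2_4 vp_2_5 vn_2_5 vp_2_6 vn_2_6 vp_2_7 vn_2_7 vp_3_4 vn_3_4 vp_3_5 vn_3_5 vp_3_6 vn_3_6 vp_3_7 vn_3_7 vp_4_5 vn_4_5 vp_4_6 vn_4_6 vp_4_7 vn_4_7 vp_5_6 vn_5_6 vp_5_7 vn_5_7 vp_6_7 vn_6_7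
  by (simp only: image_insert image_empty Un_insert_left Un_empty_left)

section \<open>Part (a): the isomorphism\<close>

datatype M = U12 | U23 | U34 | U56 | U67 | UX

primrec mat7 :: "M \<Rightarrow> complex mat" where
  "mat7 U12 = tmat 7 1 2"
| "mat7 U23 = tmat 7 2 3"
| "mat7 U34 = tmat 7 3 4"
| "mat7 U56 = tmat 7 5 6"
| "mat7 U67 = tmat 7 6 7"
| "mat7 UX = X1m"

primrec rows7 :: "M \<Rightarrow> complex list list" where
  "rows7 U12 = [[0, 1, 0, 0, 0, 0, 0],
    [1, 0, 0, 0, 0, 0, 0],
    [0, 0, 1, 0, 0, 0, 0],
    [0, 0, 0, 1, 0, 0, 0],
    [0, 0, 0, 0, 1, 0, 0],
    [0, 0, 0, 0, 0, 1, 0],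
    [0, 0, 0, 0, 0, 0, 1]]"
| "rows7 U23 = [[1, 0, 0, 0, 0, 0, 0],
    [0, 0, 1, 0, 0, 0, 0],
    [0, 1, 0, 0, 0, 0, 0],
    [0, 0, 0, 1, 0, 0, 0],
    [0, 0, 0, 0, 1, 0, 0],
    [0, 0, 0, 0, 0, 1, 0],
    [0, 0, 0, 0, 0, 0, 1]]"
| "rows7 U34 = [[1, 0, 0, 0, 0, 0, 0],
    [0, 1, 0, 0, 0, 0, 0],
    [0, 0, 0, 1, 0, 0, 0],
    [0, 0, 1, 0, 0, 0, 0],
    [0, 0, 0, 0, 1, 0, 0],
    [0, 0, 0, 0, 0, 1, 0],
    [0, 0, 0, 0, 0, 0, 1]]"
| "rows7 U56 = [[1, 0, 0, 0, 0, 0, 0],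
    [0, 1, 0, 0, 0, 0, 0],
    [0, 0, 1, 0, 0, 0, 0],
    [0, 0, 0, 1, 0, 0, 0],
    [0, 0, 0, 0, 0, 1, 0],
    [0, 0, 0, 0, 1, 0, 0],
    [0, 0, 0, 0, 0, 0, 1]]"
| "rows7 U67 = [[1, 0, 0, 0, 0, 0, 0],
    [0, 1, 0, 0, 0, 0, 0],
    [0, 0, 1, 0, 0, 0, 0],
    [0, 0, 0, 1, 0, 0, 0],
    [0, 0, 0, 0, 1, 0, 0],
    [0, 0, 0, 0, 0, 0, 1],
    [0, 0, 0, 0, 0, 1, 0]]"
| "rows7 UX = [[1, 0, 0, 0, 0, 0, 0],
    [0, 0, -1, 0, 1, 0, 0],
    [0, -1, 0, 0, 1, 0, 0],
    [0, 0, 0, 1, 0, 0, 0],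
    [0, 0, 0, 0, 1, 0, 0],
    [0, -1, -1, 0, 1, 1, 0],
    [0, -1, -1, 0, 1, 0, 1]]"

lemma tmat7_12: "tmat 7 1 2 = mat_of_rows_list 7 [[0, 1, 0, 0, 0, 0, 0],
    [1, 0, 0, 0, 0, 0, 0],
    [0, 0, 1, 0, 0, 0, 0],
    [0, 0, 0, 1, 0, 0, 0],
    [0, 0, 0, 0, 1, 0, 0],
    [0, 0, 0, 0, 0, 1, 0],
    [0, 0, 0, 0, 0, 0, 1]]"
proof (rule eq_matI)
  fix i j assume "i < dim_row (mat_of_rows_list 7 [[0, 1, 0, 0, 0, 0, 0],
    [1, 0, 0, 0, 0, 0, 0],
    [0, 0, 1, 0, 0, 0, 0],
    [0, 0, 0, 1, 0, 0, 0],
    [0, 0, 0, 0, 1, 0, 0],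
    [0, 0, 0, 0, 0, 1, 0],
    [0, 0, 0, 0, 0, 0, 1]])" "j < dim_col (mat_of_rows_list 7 [[0, 1, 0, 0, 0, 0, 0],
    [1, 0, 0, 0, 0, 0, 0],
    [0, 0, 1, 0, 0, 0, 0],
    [0, 0, 0, 1, 0, 0, 0],
    [0, 0, 0, 0, 1, 0, 0],
    [0, 0, 0, 0, 0, 1, 0],
    [0, 0, 0, 0, 0, 0, 1]])"
  then have "i < 7" "j < 7" by (simp_all add: eval_nat_numeral)
  then show "tmat 7 1 2 $$ (i,j) = mat_of_rows_list 7 [[0, 1, 0, 0, 0, 0, 0],
    [1, 0, 0, 0, 0, 0, 0],
    [0, 0, 1, 0, 0, 0, 0],
    [0, 0, 0, 1, 0, 0, 0],
    [0, 0, 0, 0, 1, 0, 0],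
    [0, 0, 0, 0, 0, 1, 0],
    [0, 0, 0, 0, 0, 0, 1]] $$ (i,j)"
    unfolding less7 by (elim disjE) (simp_all add: tmat_def mat_of_rows_list_def)
qed (simp_all add: tmat_def mat_of_rows_list_def)

lemma tmat7_23: "tmat 7 2 3 = mat_of_rows_list 7 [[1, 0, 0, 0, 0, 0, 0],
    [0, 0, 1, 0, 0, 0, 0],
    [0, 1, 0, 0, 0, 0, 0],
    [0, 0, 0, 1, 0, 0, 0],
    [0, 0, 0, 0, 1, 0, 0],
    [0, 0, 0, 0, 0, 1, 0],
    [0, 0, 0, 0, 0, 0, 1]]"
proof (rule eq_matI)
  fix i j assume "i < dim_row (mat_of_rows_list 7 [[1, 0, 0, 0, 0, 0, 0],
    [0, 0, 1, 0, 0, 0, 0],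
    [0, 1, 0, 0, 0, 0, 0],
    [0, 0, 0, 1, 0, 0, 0],
    [0, 0, 0, 0, 1, 0, 0],
    [0, 0, 0, 0, 0, 1, 0],
    [0, 0, 0, 0, 0, 0, 1]])" "j < dim_col (mat_of_rows_list 7 [[1, 0, 0, 0, 0, 0, 0],
    [0, 0, 1, 0, 0, 0, 0],
    [0, 1, 0, 0, 0, 0, 0],
    [0, 0, 0, 1, 0, 0, 0],
    [0, 0, 0, 0, 1, 0, 0],
    [0, 0, 0, 0, 0, 1, 0],
    [0, 0, 0, 0, 0, 0, 1]])"
  then have "i < 7" "j < 7" by (simp_all add: eval_nat_numeral)
  then show "tmat 7 2 3 $$ (i,j) = mat_of_rows_list 7 [[1, 0, 0, 0, 0, 0, 0],
    [0, 0, 1, 0, 0, 0, 0],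
    [0, 1, 0, 0, 0, 0, 0],
    [0, 0, 0, 1, 0, 0, 0],
    [0, 0, 0, 0, 1, 0, 0],
    [0, 0, 0, 0, 0, 1, 0],
    [0, 0, 0, 0, 0, 0, 1]] $$ (i,j)"
    unfolding less7 by (elim disjE) (simp_all add: tmat_def mat_of_rows_list_def)
qed (simp_all add: tmat_def mat_of_rows_list_def)

lemma tmat7_34: "tmat 7 3 4 = mat_of_rows_list 7 [[1, 0, 0, 0, 0, 0, 0],
    [0, 1, 0, 0, 0, 0, 0],
    [0, 0, 0, 1, 0, 0, 0],
    [0, 0, 1, 0, 0, 0, 0],
    [0, 0, 0, 0, 1, 0, 0],
    [0, 0, 0, 0, 0, 1, 0],
    [0, 0, 0, 0, 0, 0, 1]]"
proof (rule eq_matI)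
  fix i j assume "i < dim_row (mat_of_rows_list 7 [[1, 0, 0, 0, 0, 0, 0],
    [0, 1, 0, 0, 0, 0, 0],
    [0, 0, 0, 1, 0, 0, 0],
    [0, 0, 1, 0, 0, 0, 0],
    [0, 0, 0, 0, 1, 0, 0],
    [0, 0, 0, 0, 0, 1, 0],
    [0, 0, 0, 0, 0, 0, 1]])" "j < dim_col (mat_of_rows_list 7 [[1, 0, 0, 0, 0, 0, 0],
    [0, 1, 0, 0, 0, 0, 0],
    [0, 0, 0, 1, 0, 0, 0],
    [0, 0, 1, 0, 0, 0, 0],
    [0, 0, 0, 0, 1, 0, 0],
    [0, 0, 0, 0, 0, 1, 0],
    [0, 0, 0, 0, 0, 0, 1]])"
  then have "i < 7" "j < 7" by (simp_all add: eval_nat_numeral)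
  then show "tmat 7 3 4 $$ (i,j) = mat_of_rows_list 7 [[1, 0, 0, 0, 0, 0, 0],
    [0, 1, 0, 0, 0, 0, 0],
    [0, 0, 0, 1, 0, 0, 0],
    [0, 0, 1, 0, 0, 0, 0],
    [0, 0, 0, 0, 1, 0, 0],
    [0, 0, 0, 0, 0, 1, 0],
    [0, 0, 0, 0, 0, 0, 1]] $$ (i,j)"
    unfolding less7 by (elim disjE) (simp_all add: tmat_def mat_of_rows_list_def)
qed (simp_all add: tmat_def mat_of_rows_list_def)

lemma tmat7_56: "tmat 7 5 6 = mat_of_rows_list 7 [[1, 0, 0, 0, 0, 0, 0],
    [0, 1, 0, 0, 0, 0, 0],
    [0, 0, 1, 0, 0, 0, 0],
    [0, 0, 0, 1, 0, 0, 0],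
    [0, 0, 0, 0, 0, 1, 0],
    [0, 0, 0, 0, 1, 0, 0],
    [0, 0, 0, 0, 0, 0, 1]]"
proof (rule eq_matI)
  fix i j assume "i < dim_row (mat_of_rows_list 7 [[1, 0, 0, 0, 0, 0, 0],
    [0, 1, 0, 0, 0, 0, 0],
    [0, 0, 1, 0, 0, 0, 0],
    [0, 0, 0, 1, 0, 0, 0],
    [0, 0, 0, 0, 0, 1, 0],
    [0, 0, 0, 0, 1, 0, 0],
    [0, 0, 0, 0, 0, 0, 1]])" "j < dim_col (mat_of_rows_list 7 [[1, 0, 0, 0, 0, 0, 0],
    [0, 1, 0, 0, 0, 0, 0],
    [0, 0, 1, 0, 0, 0, 0],
    [0, 0, 0, 1, 0, 0, 0],
    [0, 0, 0, 0, 0, 1, 0],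
    [0, 0, 0, 0, 1, 0, 0],
    [0, 0, 0, 0, 0, 0, 1]])"
  then have "i < 7" "j < 7" by (simp_all add: eval_nat_numeral)
  then show "tmat 7 5 6 $$ (i,j) = mat_of_rows_list 7 [[1, 0, 0, 0, 0, 0, 0],
    [0, 1, 0, 0, 0, 0, 0],
    [0, 0, 1, 0, 0, 0, 0],
    [0, 0, 0, 1, 0, 0, 0],
    [0, 0, 0, 0, 0, 1, 0],
    [0, 0, 0, 0, 1, 0, 0],
    [0, 0, 0, 0, 0, 0, 1]] $$ (i,j)"
    unfolding less7 by (elim disjE) (simp_all add: tmat_def mat_of_rows_list_def)
qed (simp_all add: tmat_def mat_of_rows_list_def)

lemma tmat7_67: "tmat 7 6 7 = mat_of_rows_list 7 [[1, 0, 0, 0, 0, 0, 0],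
    [0, 1, 0, 0, 0, 0, 0],
    [0, 0, 1, 0, 0, 0, 0],
    [0, 0, 0, 1, 0, 0, 0],
    [0, 0, 0, 0, 1, 0, 0],
    [0, 0, 0, 0, 0, 0, 1],
    [0, 0, 0, 0, 0, 1, 0]]"
proof (rule eq_matI)
  fix i j assume "i < dim_row (mat_of_rows_list 7 [[1, 0, 0, 0, 0, 0, 0],
    [0, 1, 0, 0, 0, 0, 0],
    [0, 0, 1, 0, 0, 0, 0],
    [0, 0, 0, 1, 0, 0, 0],
    [0, 0, 0, 0, 1, 0, 0],
    [0, 0, 0, 0, 0, 0, 1],
    [0, 0, 0, 0, 0, 1, 0]])" "j < dim_col (mat_of_rows_list 7 [[1, 0, 0, 0, 0, 0, 0],
    [0, 1, 0, 0, 0, 0, 0],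
    [0, 0, 1, 0, 0, 0, 0],
    [0, 0, 0, 1, 0, 0, 0],
    [0, 0, 0, 0, 1, 0, 0],
    [0, 0, 0, 0, 0, 0, 1],
    [0, 0, 0, 0, 0, 1, 0]])"
  then have "i < 7" "j < 7" by (simp_all add: eval_nat_numeral)
  then show "tmat 7 6 7 $$ (i,j) = mat_of_rows_list 7 [[1, 0, 0, 0, 0, 0, 0],
    [0, 1, 0, 0, 0, 0, 0],
    [0, 0, 1, 0, 0, 0, 0],
    [0, 0, 0, 1, 0, 0, 0],
    [0, 0, 0, 0, 1, 0, 0],
    [0, 0, 0, 0, 0, 0, 1],
    [0, 0, 0, 0, 0, 1, 0]] $$ (i,j)"
    unfolding less7 by (elim disjE) (simp_all add: tmat_def mat_of_rows_list_def)
qed (simp_all add: tmat_def mat_of_rows_list_def)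

lemma tmat7_14: "tmat 7 1 4 = mat_of_rows_list 7 [[0, 0, 0, 1, 0, 0, 0],
    [0, 1, 0, 0, 0, 0, 0],
    [0, 0, 1, 0, 0, 0, 0],
    [1, 0, 0, 0, 0, 0, 0],
    [0, 0, 0, 0, 1, 0, 0],
    [0, 0, 0, 0, 0, 1, 0],
    [0, 0, 0, 0, 0, 0, 1]]"
proof (rule eq_matI)
  fix i j assume "i < dim_row (mat_of_rows_list 7 [[0, 0, 0, 1, 0, 0, 0],
    [0, 1, 0, 0, 0, 0, 0],
    [0, 0, 1, 0, 0, 0, 0],
    [1, 0, 0, 0, 0, 0, 0],
    [0, 0, 0, 0, 1, 0, 0],
    [0, 0, 0, 0, 0, 1, 0],
    [0, 0, 0, 0, 0, 0, 1]])" "j < dim_col (mat_of_rows_list 7 [[0, 0, 0, 1, 0, 0, 0],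
    [0, 1, 0, 0, 0, 0, 0],
    [0, 0, 1, 0, 0, 0, 0],
    [1, 0, 0, 0, 0, 0, 0],
    [0, 0, 0, 0, 1, 0, 0],
    [0, 0, 0, 0, 0, 1, 0],
    [0, 0, 0, 0, 0, 0, 1]])"
  then have "i < 7" "j < 7" by (simp_all add: eval_nat_numeral)
  then show "tmat 7 1 4 $$ (i,j) = mat_of_rows_list 7 [[0, 0, 0, 1, 0, 0, 0],
    [0, 1, 0, 0, 0, 0, 0],
    [0, 0, 1, 0, 0, 0, 0],
    [1, 0, 0, 0, 0, 0, 0],
    [0, 0, 0, 0, 1, 0, 0],
    [0, 0, 0, 0, 0, 1, 0],
    [0, 0, 0, 0, 0, 0, 1]] $$ (i,j)"
    unfolding less7 by (elim disjE) (simp_all add: tmat_def mat_of_rows_list_def)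
qed (simp_all add: tmat_def mat_of_rows_list_def)

lemma mat7_rows: "mat7 k = mat_of_rows_list 7 (rows7 k)"
  by (cases k) (simp_all only: mat7.simps tmat7_12 tmat7_23 tmat7_34 tmat7_56 tmat7_67 X1m_def rows7.simps)

lemma rows7_ok: "length (rows7 k) = 7" "\<forall>r\<in>set (rows7 k). length r = 7"
  by (cases k; simp)+

lemma mat7_carrier[simp]: "mat7 k \<in> carrier_mat 7 7"
  unfolding mat7_rows using mrl_carrier[of 7 "rows7 k"] rows7_ok(1)[of k] by simp

lemma mat7_sq: "mat7 k * mat7 k = 1\<^sub>m 7"
  unfolding mat7_rows one7 by (cases k) (simp_all add: mrl_mult_7 I7rows_def)

abbreviation W7 :: "M list \<Rightarrow> complex mat" where "W7 \<equiv> wprod 7 mat7"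

lemma W7_carrier[simp]: "W7 w \<in> carrier_mat 7 7"
  by (rule wprod_carrier) simp

lemma W7_append: "W7 (u @ v) = W7 u * W7 v"
  by (rule wprod_append) simp

lemma W7_single: "W7 [k] = mat7 k"
  using right_mult_one_mat[OF mat7_carrier[of k]] by simp

lemma carrier_H1: "carrier H1grp = range W7"
proof -
  have "{tmat 7 1 2, tmat 7 2 3, tmat 7 3 4, tmat 7 5 6, tmat 7 6 7, X1m} = mat7 ` UNIV"
  proof -
    have "x \<in> {U12, U23, U34, U56, U67, UX}" for x :: M by (cases x) simp_all
    then have U: "(UNIV :: M set) = {U12, U23, U34, U56, U67, UX}" by blast
    show ?thesis by (simp only: U image_insert image_empty mat7.simps)
  qed
  then have "carrier H1grp = generate (GLm 7) (mat7 ` UNIV)" unfolding H1grp_def by simp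
  also have "\<dots> = W7 ` {w. set w \<subseteq> UNIV}" by (rule gen_words) (simp_all add: mat7_sq)
  finally show ?thesis by simp
qed

primrec phi :: "L \<Rightarrow> M list" where
  "phi T23 = []"
| "phi T34 = [U56]"
| "phi T45 = [UX]"
| "phi T56 = [U34]"
| "phi T67 = [U23]"
| "phi T78 = []"
| "phi LX = [U34, U23, U12, U23, U34]"
| "phi LS = [U67]"

definition Rm :: "complex mat" where "Rm = mat_of_rows_list 7 [[0, 1, 1, 1, 0, 0, -2],
    [3/2, 3/2, 3/2, 3/2, -1, -1, -2],
    [0, 1, 1, 1, 0, -1, -1],
    [0, 1, 1, 1, -1, 0, -1],
    [0, 0, 0, 1, 0, 0, -1],
    [0, 0, 1, 0, 0, 0, -1],
    [0, 1, 0, 0, 0, 0, -1],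
    [1/2, 1/2, 1/2, 1/2, 0, 0, -1]]"
definition Lm :: "complex mat" where "Lm = mat_of_rows_list 8 [[1/2, 1/2, -1/2, -1/2, -1/2, -1/2, -1/2, 1/2],
    [1, 0, 0, 0, -1, -1, 0, 0],
    [1, 0, 0, 0, -1, 0, -1, 0],
    [1, 0, 0, 0, 0, -1, -1, 0],
    [2, 0, 0, -1, -1, -1, -1, 0],
    [2, 0, -1, 0, -1, -1, -1, 0],
    [1, 0, 0, 0, -1, -1, -1, 0]]"
definition Um :: "complex mat" where "Um = mat_of_rows_list 1 [[0],
    [-1],
    [0],
    [0],
    [0],
    [0],
    [0],
    [1]]"
definition Nu :: "complex mat" where "Nu = mat_of_rows_list 8 [[-3/4, -1/4, 1/4, 1/4, 1/4, 1/4, 1/4, 3/4]]"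

lemma X1m_carrier[simp]: "X1m \<in> carrier_mat 7 7" unfolding X1m_def by (rule mrl_carrier') simp
lemma Rm_carrier[simp]: "Rm \<in> carrier_mat 8 7" unfolding Rm_def by (rule mrl_carrier') simp
lemma Lm_carrier[simp]: "Lm \<in> carrier_mat 7 8" unfolding Lm_def by (rule mrl_carrier') simp
lemma Um_carrier[simp]: "Um \<in> carrier_mat 8 1" unfolding Um_def by (rule mrl_carrier') simp
lemma Nu_carrier[simp]: "Nu \<in> carrier_mat 1 8" unfolding Nu_def by (rule mrl_carrier') simp

lemmas comp7 = tmat7_12 tmat7_23 tmat7_34 tmat7_56 tmat7_67 tmat7_14 X1m_def one7 I7rows_def
  tmat7_12[unfolded One_nat_def] tmat7_14[unfolded One_nat_def]

lemma Um_carrier'[simp]: "Um \<in> carrier_mat 8 (Suc 0)" using Um_carrier by simp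
lemma Nu_carrier'[simp]: "Nu \<in> carrier_mat (Suc 0) 8" using Nu_carrier by simp

lemma Rm_one[simp]: "1\<^sub>m 8 * Rm = Rm" "Rm * 1\<^sub>m 7 = Rm"
  by (rule left_mult_one_mat[OF Rm_carrier], rule right_mult_one_mat[OF Rm_carrier])
lemma Um_one[simp]: "1\<^sub>m 8 * Um = Um" by (rule left_mult_one_mat[OF Um_carrier])

lemma W14: "W7 [U34, U23, U12, U23, U34] = tmat 7 1 4"
  by (simp add: comp7 mrl_mult_7)

lemma inter_letter: "l \<in> Ql \<Longrightarrow> mat8 l * Rm = Rm * W7 (phi l)"
  unfolding Ql_def Rm_def
  by (auto simp: comp8 comp7 mrl_mult_7)

lemma fix_letter: "l \<in> Ql \<Longrightarrow> mat8 l * Um = Um"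
  unfolding Ql_def Um_def by (auto simp: comp8 mrl_mult_1)

lemma LR: "Lm * Rm = 1\<^sub>m 7"
  unfolding Lm_def Rm_def one7 by (simp add: mrl_mult_7 I7rows_def)

lemma split_one: "Rm * Lm + Um * Nu = 1\<^sub>m 8"
  unfolding Lm_def Rm_def Um_def Nu_def one8 by (simp add: mrl_mult_8 mrl_add I8rows_def)

definition cphi :: "L list \<Rightarrow> M list" where "cphi w = concat (map phi w)"

lemma cphi_simps[simp]: "cphi [] = []" "cphi (l # w) = phi l @ cphi w" "cphi (u @ v) = cphi u @ cphi v"
  by (simp_all add: cphi_def)

lemma inter_word: "set w \<subseteq> Ql \<Longrightarrow> W8 w * Rm = Rm * W7 (cphi w)"
proof (induction w)
  case Nil then show ?case by simp
next
  case (Cons l w)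
  have "W8 (l # w) * Rm = mat8 l * (W8 w * Rm)" by (simp add: assoc_mult_mat[of _ 8 8 _ 8 _ 7])
  also have "\<dots> = mat8 l * (Rm * W7 (cphi w))" using Cons by simp
  also have "\<dots> = (mat8 l * Rm) * W7 (cphi w)" by (simp add: assoc_mult_mat[of _ 8 8 _ 7 _ 7])
  also have "\<dots> = (Rm * W7 (phi l)) * W7 (cphi w)" using Cons.prems inter_letter by simp
  also have "\<dots> = Rm * W7 (cphi (l # w))" by (simp add: assoc_mult_mat[of _ 8 7 _ 7 _ 7] W7_append)
  finally show ?case .
qed

lemma fix_word: "set w \<subseteq> Ql \<Longrightarrow> W8 w * Um = Um"
proof (induction w)
  case Nil then show ?case by simp
next
  case (Cons l w)
  have "W8 (l # w) * Um = mat8 l * (W8 w * Um)" by (simp add: assoc_mult_mat[of _ 8 8 _ 8 _ 1])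
  then show ?case using Cons fix_letter by simp
qed

definition mm :: "complex mat \<Rightarrow> complex mat" where "mm A = Lm * A * Rm"

lemma mm_word: "set w \<subseteq> Ql \<Longrightarrow> mm (W8 w) = W7 (cphi w)"
proof -
  assume w: "set w \<subseteq> Ql"
  have "mm (W8 w) = Lm * (W8 w * Rm)" unfolding mm_def by (simp add: assoc_mult_mat[of _ 7 8 _ 8 _ 7])
  also have "\<dots> = (Lm * Rm) * W7 (cphi w)" using inter_word[OF w] by (simp add: assoc_mult_mat[of _ 7 8 _ 7 _ 7])
  finally show ?thesis using LR by simp
qed

lemma word_inj_aux:
  assumes "X \<in> carrier_mat 8 8"
  shows "X = (X * Rm) * Lm + (X * Um) * Nu"
proof -
  have c1: "Rm * Lm \<in> carrier_mat 8 8" by (rule mult_carrier_mat[of _ 8 7]) simp_all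
  have c2: "Um * Nu \<in> carrier_mat 8 8" by (rule mult_carrier_mat[of _ 8 1]) simp_all
  have "X = X * (Rm * Lm + Um * Nu)" using split_one assms by simp
  also have "\<dots> = X * (Rm * Lm) + X * (Um * Nu)"
    by (rule mult_add_distrib_mat[OF assms c1 c2])
  also have "\<dots> = (X * Rm) * Lm + (X * Um) * Nu"
    using assms by (simp add: assoc_mult_mat[of _ 8 8 _ 7 _ 8] assoc_mult_mat[of _ 8 8 _ 1 _ 8])
  finally show ?thesis .
qed

lemma mm_inj: "set u \<subseteq> Ql \<Longrightarrow> set v \<subseteq> Ql \<Longrightarrow> mm (W8 u) = mm (W8 v) \<Longrightarrow> W8 u = W8 v"
proof -
  assume u: "set u \<subseteq> Ql" and v: "set v \<subseteq> Ql" and e: "mm (W8 u) = mm (W8 v)"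
  have "W8 u * Rm = W8 v * Rm" using e inter_word[OF u] inter_word[OF v] mm_word[OF u] mm_word[OF v] by simp
  moreover have "W8 u * Um = W8 v * Um" using fix_word[OF u] fix_word[OF v] by simp
  ultimately show ?thesis using word_inj_aux[of "W8 u"] word_inj_aux[of "W8 v"] by (metis W8_carrier)
qed

lemma phi_surj_letter: "\<exists>w. set w \<subseteq> Ql \<and> W7 (cphi w) = mat7 k"
proof (cases k)
  case U12
  have "W7 (cphi [T67, T56, T67, LX, T67, T56, T67]) = mat7 U12"
    by (simp add: comp7 mrl_mult_7)
  then show ?thesis using U12 by (intro exI[of _ "[T67, T56, T67, LX, T67, T56, T67]"]) (simp add: Ql_def)
next
  case U23 then show ?thesis by (intro exI[of _ "[T67]"]) (simp add: Ql_def W7_single)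
next
  case U34 then show ?thesis by (intro exI[of _ "[T56]"]) (simp add: Ql_def W7_single)
next
  case U56 then show ?thesis by (intro exI[of _ "[T34]"]) (simp add: Ql_def W7_single)
next
  case U67 then show ?thesis by (intro exI[of _ "[LS]"]) (simp add: Ql_def W7_single)
next
  case UX then show ?thesis by (intro exI[of _ "[T45]"]) (simp add: Ql_def W7_single)
qed

lemma phi_surj: "\<exists>w. set w \<subseteq> Ql \<and> W7 (cphi w) = W7 v"
proof (induction v)
  case Nil then show ?case by (intro exI[of _ "[]"]) simp
next
  case (Cons k v)
  obtain w where w: "set w \<subseteq> Ql" "W7 (cphi w) = W7 v" using Cons by blast
  obtain w1 where w1: "set w1 \<subseteq> Ql" "W7 (cphi w1) = mat7 k" using phi_surj_letter by blast
  have "W7 (cphi (w1 @ w)) = W7 (k # v)" using w w1 by (simp add: W7_append)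
  then show ?case using w w1 by (intro exI[of _ "w1 @ w"]) simp
qed

lemma mm_iso: "mm \<in> iso Qgrp H1grp"
proof -
  have hom: "mm \<in> hom Qgrp H1grp"
  proof (rule homI)
    fix x assume "x \<in> carrier Qgrp"
    then obtain w where "set w \<subseteq> Ql" "x = W8 w" unfolding carrier_Q by auto
    then show "mm x \<in> carrier H1grp" unfolding carrier_H1 using mm_word by simp
  next
    fix x y assume "x \<in> carrier Qgrp" "y \<in> carrier Qgrp"
    then obtain u v where uv: "set u \<subseteq> Ql" "x = W8 u" "set v \<subseteq> Ql" "y = W8 v" unfolding carrier_Q by auto
    have "mm (x * y) = mm (W8 (u @ v))" using uv by (simp add: W8_append)
    also have "\<dots> = W7 (cphi u) * W7 (cphi v)" using uv by (simp add: mm_word W7_append)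
    finally show "mm (x \<otimes>\<^bsub>Qgrp\<^esub> y) = mm x \<otimes>\<^bsub>H1grp\<^esub> mm y" using uv
      by (simp add: Qgrp_def H1grp_def mm_word)
  qed
  have inj: "inj_on mm (carrier Qgrp)"
  proof (rule inj_onI)
    fix x y assume "x \<in> carrier Qgrp" "y \<in> carrier Qgrp" "mm x = mm y"
    then obtain u v where "set u \<subseteq> Ql" "x = W8 u" "set v \<subseteq> Ql" "y = W8 v" "mm x = mm y" unfolding carrier_Q by auto
    then show "x = y" using mm_inj by blast
  qed
  have img: "mm ` carrier Qgrp = carrier H1grp"
  proof
    show "mm ` carrier Qgrp \<subseteq> carrier H1grp" using hom unfolding hom_def by auto
    show "carrier H1grp \<subseteq> mm ` carrier Qgrp"
    proof
      fix z assume "z \<in> carrier H1grp"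
      then obtain v where z: "z = W7 v" unfolding carrier_H1 by auto
      obtain w where w: "set w \<subseteq> Ql" "W7 (cphi w) = W7 v" using phi_surj by blast
      have "z = mm (W8 w)" using w z mm_word by simp
      moreover have "W8 w \<in> carrier Qgrp" unfolding carrier_Q using w by auto
      ultimately show "z \<in> mm ` carrier Qgrp" by blast
    qed
  qed
  show ?thesis unfolding iso_def using hom inj img by (auto simp: bij_betw_def)
qed

lemma mm_gens: "mm s1 = a5" "mm s2 = a4" "mm s3 = a3" "mm s4 = a2" "mm s5 = a1" "mm s3' = a1'"
proof -
  have key: "mm (mat8 l) = W7 (phi l)" if "l \<in> Ql" for l
    using mm_word[of "[l]"] that W8_single[of l] by simp
  show "mm s1 = a5" using key[of LS] by (simp add: Ql_def a5_def W7_single)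
  show "mm s2 = a4" using key[of T34] by (simp add: Ql_def a4_def s2_def W7_single)
  show "mm s3 = a3" using key[of T45] by (simp add: Ql_def a3_def s3_def W7_single)
  show "mm s4 = a2" using key[of T56] by (simp add: Ql_def a2_def s4_def W7_single)
  show "mm s5 = a1" using key[of T67] by (simp add: Ql_def a1_def s5_def W7_single)
  show "mm s3' = a1'" using key[of LX] by (simp add: Ql_def a1'_def s3'_def W14 del: wprod.simps)
qed

theorem proposition5p3:
  shows "(\<exists>m. m \<in> iso Qgrp H1grp \<and> m s1 = a5 \<and> m s2 = a4 \<and> m s3 = a3 \<and> m s4 = a2
              \<and> m s5 = a1 \<and> m s3' = a1')
       \<and> Q_orbits = {O1, O2, O3} \<and> card Q_orbits = 3"
proof (intro conjI)
  show "\<exists>m. m \<in> iso Qgrp H1grp \<and> m s1 = a5 \<and> m s2 = a4 \<and> m s3 = a3 \<and> m s4 = a2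
              \<and> m s5 = a1 \<and> m s3' = a1'"
    using mm_iso mm_gens by blast
  show "Q_orbits = {O1, O2, O3}" unfolding Q_orbits_eq orbits_three O1_eq O2_eq O3_eq by simp
  show "card Q_orbits = 3" unfolding Q_orbits_eq orbits_three by (rule card_three)
qed

end
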